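(* Let $A$ be a ring, $\mathcal C$ a coseparable $A$-coring with cointegral $\delta$, and $e\in\mathcal C^A$. Let $\mathbb X^{\mathcal C}_{\delta,e}$ be the supplemented S-category described in the context. A right $\mathcal C$-comodule $M$ is formally $\mathbb X^{\mathcal C}_{\delta,e}$-smooth if and only if the map $$\kappa_M:M\to M,\qquad m\mapsto \sum m_{(0)}\,\delta(e\otimes_A m_{(1)})$$ has a left inverse in $\mathrm{End}_A(M)$ (the ring of right $A$-module endomorphisms of $M$).
   Context: An $A$-coring $\mathcal C$ has coproduct $\Delta_{\mathcal C}(c)=\sum c_{(1)}\otimes_A c_{(2)}$ and counit $\varepsilon_{\mathcal C}$; right comodules $M$ have coaction $\varrho^M(m)=\sum m_{(0)}\otimes_A m_{(1)}$; $\mathfrak M^{\mathcal C}$ is the category of right $\mathcal C$-comodules, $\mathfrak M_A$ that of right $A$-modules. $\mathcal C$ is coseparable with cointegral $\delta$ if $\delta:\mathcal C\otimes_A\mathcal C\to A$ is an $(A,A)$-bimodule map with $\delta\circ\Delta_{\mathcal C}=\varepsilon_{\mathcal C}$ and $(\mathcal C\otimes_A\delta)\circ(\Delta_{\mathcal C}\otimes_A\mathcal C)=(\delta\otimes_A\mathcal C)\circ(\mathcal C\otimes_A\Delta_{\mathcal C})$. $\mathcal C^A=\{c\in\mathcal C: ac=ca\ \forall a\in A\}$. General definitions: an S-category is a pair of functors $u^*:\mathfrak X\to\bar{\mathfrak X}$, $u_*:\bar{\mathfrak X}\to\mathfrak X$ with $u^*\dashv u_*$ and a chosen natural left inverse $\nu$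 of the unit $\eta$; it is supplemented by a functor $u_!:\bar{\mathfrak X}\to\mathfrak X$ and natural transformation $\bar\eta:\mathrm{Id}\to u^*u_!$; one sets $r_y=\nu_{u_!(y)}\circ u_*(\bar\eta_y):u_*(y)\to u_!(y)$. An object $x\in\mathfrak X$ is formally $\mathbb X$-smooth if $\mathfrak X(x,r_y):g\mapsto r_y\circ g$ is surjective for all $y\in\bar{\mathfrak X}$, and formally $\mathbb X$-cosmooth if $\mathfrak X(r_y,x):g\mapsto g\circ r_y$ is surjective for all $y$. $\mathbb X^{\mathcal C}_{\delta,e}$: $\mathfrak X=\mathfrak M^{\mathcal C}$, $\bar{\mathfrak X}=\mathfrak M_A$, $u^*$ the forgetful functor, $u_*=-\otimes_A\mathcal C$ (right adjoint to $u^*$), $\nu_M:M\otimes_A\mathcal C\to M$, $m\otimes_A c\mapsto\sum m_{(0)}\delta(m_{(1)}\otimes_A c)$, $u_!=-\otimes_A\mathcal C$, $\bar\eta_N:N\to N\otimes_A\mathcal C$, $n\mapsto n\otimes_A e$. Thus for $N\in\mathfrak M_A$, $r_N:N\otimes_A\mathcal C\to N\otimes_A\mathcal C$, $n\otimes_A c\mapsto\sum n\otimes_A e_{(1)}\delta(e_{(2)}\otimes_A c)$. So $M$ is formally smooth iff for every right $A$-module $N$, $\mathrm{Hom}^{\mathcal C}(M,N\otimes_A\mathcal C)\to\mathrm{Hom}^{\mathcal C}(M,N\otimes_A\mathcal C)$, $g\mapsto r_N\circ g$, is surjective. *)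

theory Defs
  imports "HOL-Algebra.Ring"
begin

text \<open>An additive abelian group (HOL-Algebra ring record, multiplication unused)
  together with a left and a right action of the ring A.  A right A-module only
  uses the right action.\<close>

record ('a, 'm) bimod = "'m ring" +
  lact :: "'a \<Rightarrow> 'm \<Rightarrow> 'm"
  ract :: "'m \<Rightarrow> 'a \<Rightarrow> 'm"

definition rmod :: "('a::ring_1, 'm) bimod \<Rightarrow> bool" where
  "rmod M \<longleftrightarrow> abelian_group M \<and>
     (\<forall>m\<in>carrier M. \<forall>a. ract M m a \<in> carrier M) \<and>
     (\<forall>m\<in>carrier M. \<forall>m'\<in>carrier M. \<forall>a. ract M (m \<oplus>\<^bsub>M\<^esub> m') a = ract M m a \<oplus>\<^bsub>M\<^esub> ract M m' a) \<and>
     (\<forall>m\<in>carrier M. \<forall>a b. ract M m (a + b) = ract M m a \<oplus>\<^bsub>M\<^esub> ract M m b) \<and>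
     (\<forall>m\<in>carrier M. \<forall>a b. ract M (ract M m a) b = ract M m (a * b)) \<and>
     (\<forall>m\<in>carrier M. ract M m 1 = m)"

definition lmod :: "('a::ring_1, 'm) bimod \<Rightarrow> bool" where
  "lmod M \<longleftrightarrow> abelian_group M \<and>
     (\<forall>m\<in>carrier M. \<forall>a. lact M a m \<in> carrier M) \<and>
     (\<forall>m\<in>carrier M. \<forall>m'\<in>carrier M. \<forall>a. lact M a (m \<oplus>\<^bsub>M\<^esub> m') = lact M a m \<oplus>\<^bsub>M\<^esub> lact M a m') \<and>
     (\<forall>m\<in>carrier M. \<forall>a b. lact M (a + b) m = lact M a m \<oplus>\<^bsub>M\<^esub> lact M b m) \<and>
     (\<forall>m\<in>carrier M. \<forall>a b. lact M a (lact M b m) = lact M (a * b) m) \<and>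
     (\<forall>m\<in>carrier M. lact M 1 m = m)"

definition bimodule :: "('a::ring_1, 'm) bimod \<Rightarrow> bool" where
  "bimodule M \<longleftrightarrow> rmod M \<and> lmod M \<and>
     (\<forall>m\<in>carrier M. \<forall>a b. ract M (lact M a m) b = lact M a (ract M m b))"

definition rhom :: "('a::ring_1, 'm) bimod \<Rightarrow> ('a, 'n) bimod \<Rightarrow> ('m \<Rightarrow> 'n) \<Rightarrow> bool" where
  "rhom M N f \<longleftrightarrow> f \<in> carrier M \<rightarrow> carrier N \<and>
     (\<forall>m\<in>carrier M. \<forall>m'\<in>carrier M. f (m \<oplus>\<^bsub>M\<^esub> m') = f m \<oplus>\<^bsub>N\<^esub> f m') \<and>
     (\<forall>m\<in>carrier M. \<forall>a. f (ract M m a) = ract N (f m) a)"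

definition bihom :: "('a::ring_1, 'm) bimod \<Rightarrow> ('a, 'n) bimod \<Rightarrow> ('m \<Rightarrow> 'n) \<Rightarrow> bool" where
  "bihom M N f \<longleftrightarrow> rhom M N f \<and> (\<forall>m\<in>carrier M. \<forall>a. f (lact M a m) = lact N a (f m))"

definition bihomA :: "('a::ring_1, 'm) bimod \<Rightarrow> ('m \<Rightarrow> 'a) \<Rightarrow> bool" where
  "bihomA M f \<longleftrightarrow>
     (\<forall>m\<in>carrier M. \<forall>m'\<in>carrier M. f (m \<oplus>\<^bsub>M\<^esub> m') = f m + f m') \<and>
     (\<forall>m\<in>carrier M. \<forall>a. f (lact M a m) = a * f m) \<and>
     (\<forall>m\<in>carrier M. \<forall>a. f (ract M m a) = f m * a)"

text \<open>Tensor product M \<otimes>_A N of (the right A-module structure of) M and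
  (the left A-module structure of) N, constructed as the free abelian group on
  carrier M \<times> carrier N (finitely supported integer-valued functions) modulo
  the subgroup generated by the bilinearity and A-balancedness relations.
  Elements are the cosets.\<close>

definition fgen :: "('a, 'm, 'x) bimod_scheme \<Rightarrow> ('a, 'n, 'y) bimod_scheme \<Rightarrow> ('m \<times> 'n \<Rightarrow> int) set" where
  "fgen M N = {f. finite {p. f p \<noteq> 0} \<and> {p. f p \<noteq> 0} \<subseteq> carrier M \<times> carrier N}"

definition dlt :: "'p \<Rightarrow> 'p \<Rightarrow> int" where
  "dlt p = (\<lambda>q. if q = p then 1 else 0)"

inductive_set trel :: "('a, 'm, 'x) bimod_scheme \<Rightarrow> ('a, 'n, 'y) bimod_scheme \<Rightarrow> ('m \<times> 'n \<Rightarrow> int) set"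
  for M N where
  zero: "(\<lambda>_. 0) \<in> trel M N"
| add: "f \<in> trel M N \<Longrightarrow> g \<in> trel M N \<Longrightarrow> (\<lambda>p. f p + g p) \<in> trel M N"
| neg: "f \<in> trel M N \<Longrightarrow> (\<lambda>p. - f p) \<in> trel M N"
| gen_l: "m \<in> carrier M \<Longrightarrow> m' \<in> carrier M \<Longrightarrow> n \<in> carrier N \<Longrightarrow>
     (\<lambda>p. dlt (m \<oplus>\<^bsub>M\<^esub> m', n) p - dlt (m, n) p - dlt (m', n) p) \<in> trel M N"
| gen_r: "m \<in> carrier M \<Longrightarrow> n \<in> carrier N \<Longrightarrow> n' \<in> carrier N \<Longrightarrow>
     (\<lambda>p. dlt (m, n \<oplus>\<^bsub>N\<^esub> n') p - dlt (m, n) p - dlt (m, n') p) \<in> trel M N"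
| gen_bal: "m \<in> carrier M \<Longrightarrow> n \<in> carrier N \<Longrightarrow>
     (\<lambda>p. dlt (ract M m a, n) p - dlt (m, lact N a n) p) \<in> trel M N"

definition tcls :: "('a, 'm, 'x) bimod_scheme \<Rightarrow> ('a, 'n, 'y) bimod_scheme \<Rightarrow> ('m \<times> 'n \<Rightarrow> int) \<Rightarrow> ('m \<times> 'n \<Rightarrow> int) set" where
  "tcls M N f = {g \<in> fgen M N. (\<lambda>p. g p - f p) \<in> trel M N}"

definition rep :: "('p \<Rightarrow> int) set \<Rightarrow> ('p \<Rightarrow> int)" where
  "rep X = (SOME f. f \<in> X)"

definition fext :: "('p \<Rightarrow> 'q) \<Rightarrow> ('p \<Rightarrow> int) \<Rightarrow> ('q \<Rightarrow> int)" where
  "fext \<phi> f = (\<lambda>q. \<Sum>p\<in>{p. f p \<noteq> 0 \<and> \<phi> p = q}. f p)"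

definition tensor :: "('a, 'm, 'x) bimod_scheme \<Rightarrow> ('a, 'n, 'y) bimod_scheme \<Rightarrow> ('a, ('m \<times> 'n \<Rightarrow> int) set) bimod" where
  "tensor M N = \<lparr> carrier = tcls M N ` fgen M N,
      monoid.mult = (\<lambda>X Y. tcls M N (\<lambda>_. 0)),
      one = tcls M N (\<lambda>_. 0),
      zero = tcls M N (\<lambda>_. 0),
      add = (\<lambda>X Y. tcls M N (\<lambda>p. rep X p + rep Y p)),
      lact = (\<lambda>a X. tcls M N (fext (\<lambda>(m, n). (lact M a m, n)) (rep X))),
      ract = (\<lambda>X a. tcls M N (fext (\<lambda>(m, n). (m, ract N n a)) (rep X))) \<rparr>"

definition tmk :: "('a, 'm, 'x) bimod_scheme \<Rightarrow> ('a, 'n, 'y) bimod_scheme \<Rightarrow> 'm \<Rightarrow> 'n \<Rightarrow> ('m \<times> 'n \<Rightarrow> int) set" where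
  "tmk M N m n = tcls M N (dlt (m, n))"

definition tmap :: "('a, 'm', 'x) bimod_scheme \<Rightarrow> ('a, 'n', 'y) bimod_scheme \<Rightarrow> ('m \<Rightarrow> 'm') \<Rightarrow> ('n \<Rightarrow> 'n')
    \<Rightarrow> ('m \<times> 'n \<Rightarrow> int) set \<Rightarrow> ('m' \<times> 'n' \<Rightarrow> int) set" where
  "tmap M' N' \<phi> \<psi> X = tcls M' N' (fext (\<lambda>(m, n). (\<phi> m, \<psi> n)) (rep X))"

text \<open>The additive map M \<otimes>_A N \<rightarrow> T induced by a (balanced, biadditive)
  map \<beta> : M \<times> N \<rightarrow> T: \<Sum> m \<otimes> n \<mapsto> \<Sum> \<beta> m n.\<close>
definition tlift :: "('t, 'z) ring_scheme \<Rightarrow> ('m \<Rightarrow> 'n \<Rightarrow> 't) \<Rightarrow> ('m \<times> 'n \<Rightarrow> int) set \<Rightarrow> 't" where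
  "tlift T \<beta> X = (\<Oplus>\<^bsub>T\<^esub> p\<in>{p. rep X p \<noteq> 0}. add_pow T (rep X p) (\<beta> (fst p) (snd p)))"

definition tassoc :: "('a, 'm, 'x) bimod_scheme \<Rightarrow> ('a, 'n, 'y) bimod_scheme \<Rightarrow> ('a, 'p, 'w) bimod_scheme
    \<Rightarrow> ((('m \<times> 'n \<Rightarrow> int) set) \<times> 'p \<Rightarrow> int) set \<Rightarrow> ('m \<times> ('n \<times> 'p \<Rightarrow> int) set \<Rightarrow> int) set" where
  "tassoc M N P X = tlift (tensor M (tensor N P))
     (\<lambda>x p. tlift (tensor M (tensor N P)) (\<lambda>m n. tmk M (tensor N P) m (tmk N P n p)) x) X"

definition coring :: "('a::ring_1, 'c) bimod \<Rightarrow> ('c \<Rightarrow> ('c \<times> 'c \<Rightarrow> int) set) \<Rightarrow> ('c \<Rightarrow> 'a) \<Rightarrow> bool" where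
  "coring C \<Delta> \<epsilon> \<longleftrightarrow> bimodule C \<and>
     bihom C (tensor C C) \<Delta> \<and> bihomA C \<epsilon> \<and>
     (\<forall>c\<in>carrier C. tassoc C C C (tmap (tensor C C) C \<Delta> id (\<Delta> c)) = tmap C (tensor C C) id \<Delta> (\<Delta> c)) \<and>
     (\<forall>c\<in>carrier C. tlift C (\<lambda>x y. lact C (\<epsilon> x) y) (\<Delta> c) = c) \<and>
     (\<forall>c\<in>carrier C. tlift C (\<lambda>x y. ract C x (\<epsilon> y)) (\<Delta> c) = c)"

definition coseparable :: "('a::ring_1, 'c) bimod \<Rightarrow> ('c \<Rightarrow> ('c \<times> 'c \<Rightarrow> int) set) \<Rightarrow> ('c \<Rightarrow> 'a)
    \<Rightarrow> (('c \<times> 'c \<Rightarrow> int) set \<Rightarrow> 'a) \<Rightarrow> bool" where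
  "coseparable C \<Delta> \<epsilon> \<delta> \<longleftrightarrow> coring C \<Delta> \<epsilon> \<and>
     bihomA (tensor C C) \<delta> \<and>
     (\<forall>c\<in>carrier C. \<delta> (\<Delta> c) = \<epsilon> c) \<and>
     (\<forall>c\<in>carrier C. \<forall>c'\<in>carrier C.
        tlift C (\<lambda>x y. ract C x (\<delta> (tmk C C y c'))) (\<Delta> c)
      = tlift C (\<lambda>x y. lact C (\<delta> (tmk C C c x)) y) (\<Delta> c'))"

definition coinv :: "('a::ring_1, 'c) bimod \<Rightarrow> 'c set" where
  "coinv C = {c \<in> carrier C. \<forall>a. lact C a c = ract C c a}"

definition comodule :: "('a::ring_1, 'c) bimod \<Rightarrow> ('c \<Rightarrow> ('c \<times> 'c \<Rightarrow> int) set) \<Rightarrow> ('c \<Rightarrow> 'a)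
    \<Rightarrow> ('a, 'm) bimod \<Rightarrow> ('m \<Rightarrow> ('m \<times> 'c \<Rightarrow> int) set) \<Rightarrow> bool" where
  "comodule C \<Delta> \<epsilon> M \<rho> \<longleftrightarrow> rmod M \<and> rhom M (tensor M C) \<rho> \<and>
     (\<forall>m\<in>carrier M. tlift M (\<lambda>x c. ract M x (\<epsilon> c)) (\<rho> m) = m) \<and>
     (\<forall>m\<in>carrier M. tassoc M C C (tmap (tensor M C) C \<rho> id (\<rho> m)) = tmap M (tensor C C) id \<Delta> (\<rho> m))"

text \<open>Right C-comodule maps g : M \<rightarrow> N \<otimes>_A C, where N \<otimes>_A C carries
  the coaction N \<otimes>_A \<Delta> (compared in N \<otimes> (C \<otimes> C) via the
  associativity isomorphism).\<close>
definition comod_map_to :: "('a::ring_1, 'c) bimod \<Rightarrow> ('c \<Rightarrow> ('c \<times> 'c \<Rightarrow> int) set)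
    \<Rightarrow> ('a, 'm) bimod \<Rightarrow> ('m \<Rightarrow> ('m \<times> 'c \<Rightarrow> int) set) \<Rightarrow> ('a, 'n) bimod
    \<Rightarrow> ('m \<Rightarrow> ('n \<times> 'c \<Rightarrow> int) set) \<Rightarrow> bool" where
  "comod_map_to C \<Delta> M \<rho> N g \<longleftrightarrow> rhom M (tensor N C) g \<and>
     (\<forall>m\<in>carrier M. tmap N (tensor C C) id \<Delta> (g m) = tassoc N C C (tmap (tensor N C) C g id (\<rho> m)))"

text \<open>The map r_N : N \<otimes>_A C \<rightarrow> N \<otimes>_A C,
  n \<otimes> c \<mapsto> \<Sum> n \<otimes> e_(1) \<delta>(e_(2) \<otimes> c), of the supplemented S-category
  \<X>^C_{\<delta>,e}.\<close>
definition rmap :: "('a::ring_1, 'c) bimod \<Rightarrow> ('c \<Rightarrow> ('c \<times> 'c \<Rightarrow> int) set)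
    \<Rightarrow> (('c \<times> 'c \<Rightarrow> int) set \<Rightarrow> 'a) \<Rightarrow> 'c \<Rightarrow> ('a, 'n) bimod
    \<Rightarrow> ('n \<times> 'c \<Rightarrow> int) set \<Rightarrow> ('n \<times> 'c \<Rightarrow> int) set" where
  "rmap C \<Delta> \<delta> e N X = tlift (tensor N C)
     (\<lambda>n c. tmk N C n (tlift C (\<lambda>x y. ract C x (\<delta> (tmk C C y c))) (\<Delta> e))) X"

text \<open>Formal \<X>^C_{\<delta>,e}-smoothness of the comodule (M,\<rho>), with the test
  modules N ranging over right A-modules whose underlying type is 'n.\<close>
definition formally_smooth :: "'n itself \<Rightarrow> ('a::ring_1, 'c) bimod \<Rightarrow> ('c \<Rightarrow> ('c \<times> 'c \<Rightarrow> int) set)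
    \<Rightarrow> (('c \<times> 'c \<Rightarrow> int) set \<Rightarrow> 'a) \<Rightarrow> 'c \<Rightarrow> ('a, 'm) bimod \<Rightarrow> ('m \<Rightarrow> ('m \<times> 'c \<Rightarrow> int) set) \<Rightarrow> bool" where
  "formally_smooth _ C \<Delta> \<delta> e M \<rho> \<longleftrightarrow>
     (\<forall>N :: ('a, 'n) bimod. rmod N \<longrightarrow>
        (\<forall>h. comod_map_to C \<Delta> M \<rho> N h \<longrightarrow>
           (\<exists>g. comod_map_to C \<Delta> M \<rho> N g \<and> (\<forall>m\<in>carrier M. rmap C \<Delta> \<delta> e N (g m) = h m))))"

definition kappa :: "('a::ring_1, 'c) bimod \<Rightarrow> (('c \<times> 'c \<Rightarrow> int) set \<Rightarrow> 'a) \<Rightarrow> 'c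
    \<Rightarrow> ('a, 'm) bimod \<Rightarrow> ('m \<Rightarrow> ('m \<times> 'c \<Rightarrow> int) set) \<Rightarrow> 'm \<Rightarrow> 'm" where
  "kappa C \<delta> e M \<rho> m = tlift M (\<lambda>x c. ract M x (\<delta> (tmk C C e c))) (\<rho> m)"

end

theory Submission
  imports Defs
begin


definition tens_ok :: "('a::ring_1,'m,'x) bimod_scheme \<Rightarrow> ('a,'n,'y) bimod_scheme \<Rightarrow> bool" where
  "tens_ok M N \<longleftrightarrow> abelian_group M \<and> abelian_group N \<and>
     (\<forall>m\<in>carrier M. \<forall>a. ract M m a \<in> carrier M) \<and> (\<forall>n\<in>carrier N. \<forall>a. lact N a n \<in> carrier N)"

lemma fgen_iff: "f \<in> fgen M N \<longleftrightarrow> finite {p. f p \<noteq> 0} \<and> {p. f p \<noteq> 0} \<subseteq> carrier M \<times> carrier N"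
  by (simp add: fgen_def)

lemma fgen_zero[simp]: "(\<lambda>_. 0) \<in> fgen M N"
  by (simp add: fgen_def)

lemma fgen_add: "f \<in> fgen M N \<Longrightarrow> g \<in> fgen M N \<Longrightarrow> (\<lambda>p. f p + g p) \<in> fgen M N"
proof -
  assume a: "f \<in> fgen M N" "g \<in> fgen M N"
  have s: "{p. f p + g p \<noteq> 0} \<subseteq> {p. f p \<noteq> 0} \<union> {p. g p \<noteq> 0}" by auto
  show ?thesis using a s unfolding fgen_def by (auto intro: finite_subset)
qed

lemma fgen_scale: "f \<in> fgen M N \<Longrightarrow> (\<lambda>p. k * f p) \<in> fgen M N"
proof -
  assume a: "f \<in> fgen M N"
  have s: "{p. k * f p \<noteq> 0} \<subseteq> {p. f p \<noteq> 0}" by auto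
  show ?thesis using a s unfolding fgen_def by (auto intro: finite_subset)
qed

lemma fgen_neg: "f \<in> fgen M N \<Longrightarrow> (\<lambda>p. - f p) \<in> fgen M N"
  using fgen_scale[of f M N "-1"] by simp

lemma fgen_diff: "f \<in> fgen M N \<Longrightarrow> g \<in> fgen M N \<Longrightarrow> (\<lambda>p. f p - g p) \<in> fgen M N"
  using fgen_add[OF _ fgen_neg, of f M N g] by simp

lemma fgen_dlt: "p \<in> carrier M \<times> carrier N \<Longrightarrow> dlt p \<in> fgen M N"
proof -
  assume "p \<in> carrier M \<times> carrier N"
  moreover have "{q. dlt p q \<noteq> 0} = {p}" by (auto simp: dlt_def)
  ultimately show ?thesis by (simp add: fgen_def)
qed

lemma fgen_sum: "finite I \<Longrightarrow> (\<And>i. i \<in> I \<Longrightarrow> F i \<in> fgen M N) \<Longrightarrow> (\<lambda>p. \<Sum>i\<in>I. F i p) \<in> fgen M N"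
proof (induction I rule: finite_induct)
  case empty then show ?case by simp
next
  case (insert x F') then show ?case by (simp add: fgen_add)
qed

lemma trel_fgen:
  assumes ok: "tens_ok M N" and f: "f \<in> trel M N"
  shows "f \<in> fgen M N"
  using f
proof (induction rule: trel.induct)
  case zero then show ?case by simp
next
  case (add f g) then show ?case by (intro fgen_add)
next
  case (neg f) show ?case using neg.IH by (rule fgen_neg)
next
  case (gen_l m m' n)
  have "m \<oplus>\<^bsub>M\<^esub> m' \<in> carrier M" using ok gen_l unfolding tens_ok_def
    by (meson abelian_groupE(1))
  then show ?case using gen_l by (intro fgen_diff fgen_dlt) auto
next
  case (gen_r m n n')
  have "n \<oplus>\<^bsub>N\<^esub> n' \<in> carrier N" using ok gen_r unfolding tens_ok_def
    by (meson abelian_groupE(1))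
  then show ?case using gen_r by (intro fgen_diff fgen_dlt) auto
next
  case (gen_bal m n a)
  then show ?case using ok unfolding tens_ok_def by (intro fgen_diff fgen_dlt) auto
qed

lemma trel_diff: "f \<in> trel M N \<Longrightarrow> g \<in> trel M N \<Longrightarrow> (\<lambda>p. f p - g p) \<in> trel M N"
  using trel.add[OF _ trel.neg, of f M N g] by simp

lemma trel_zero': "(\<lambda>p. f p - f p) \<in> trel M N"
  using trel.zero by simp

lemma tcls_self: "f \<in> fgen M N \<Longrightarrow> f \<in> tcls M N f"
  using trel.zero[of M N] by (simp add: tcls_def)

lemma tcls_eq_iff:
  assumes f: "f \<in> fgen M N" and g: "g \<in> fgen M N"
  shows "tcls M N f = tcls M N g \<longleftrightarrow> (\<lambda>p. f p - g p) \<in> trel M N"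
proof
  assume "tcls M N f = tcls M N g"
  then have "f \<in> tcls M N g" using tcls_self[OF f] by simp
  then show "(\<lambda>p. f p - g p) \<in> trel M N" by (simp add: tcls_def)
next
  assume fg: "(\<lambda>p. f p - g p) \<in> trel M N"
  show "tcls M N f = tcls M N g"
  proof (rule Set.set_eqI)
    fix h
    have e1: "(\<lambda>p. h p - g p) = (\<lambda>p. (h p - f p) + (f p - g p))" by auto
    have e2: "(\<lambda>p. h p - f p) = (\<lambda>p. (h p - g p) - (f p - g p))" by auto
    have a1: "(\<lambda>p. h p - f p) \<in> trel M N \<Longrightarrow> (\<lambda>p. h p - g p) \<in> trel M N"
    proof -
      assume "(\<lambda>p. h p - f p) \<in> trel M N"
      from trel.add[OF this fg] show ?thesis unfolding e1 .
    qed
    have a2: "(\<lambda>p. h p - g p) \<in> trel M N \<Longrightarrow> (\<lambda>p. h p - f p) \<in> trel M N"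
    proof -
      assume "(\<lambda>p. h p - g p) \<in> trel M N"
      from trel_diff[OF this fg] show ?thesis unfolding e2 .
    qed
    show "h \<in> tcls M N f \<longleftrightarrow> h \<in> tcls M N g"
      unfolding tcls_def using a1 a2 by blast
  qed
qed

lemma rep_tcls:
  assumes f: "f \<in> fgen M N"
  shows "rep (tcls M N f) \<in> fgen M N" "(\<lambda>p. rep (tcls M N f) p - f p) \<in> trel M N"
    "tcls M N (rep (tcls M N f)) = tcls M N f"
proof -
  have "rep (tcls M N f) \<in> tcls M N f" unfolding rep_def using tcls_self[OF f] some_in_eq by fast
  then show r1: "rep (tcls M N f) \<in> fgen M N" and r2: "(\<lambda>p. rep (tcls M N f) p - f p) \<in> trel M N"
    by (auto simp: tcls_def)
  show "tcls M N (rep (tcls M N f)) = tcls M N f" using tcls_eq_iff[OF r1 f] r2 by simp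
qed

lemma tensor_carrier: "X \<in> carrier (tensor M N) \<longleftrightarrow> (\<exists>f\<in>fgen M N. X = tcls M N f)"
  by (auto simp: tensor_def)

lemma tensor_add_tcls:
  assumes f: "f \<in> fgen M N" and g: "g \<in> fgen M N"
  shows "tcls M N f \<oplus>\<^bsub>tensor M N\<^esub> tcls M N g = tcls M N (\<lambda>p. f p + g p)"
proof -
  let ?r = "rep (tcls M N f)" and ?s = "rep (tcls M N g)"
  have "tcls M N f \<oplus>\<^bsub>tensor M N\<^esub> tcls M N g = tcls M N (\<lambda>p. ?r p + ?s p)"
    by (simp add: tensor_def)
  also have "\<dots> = tcls M N (\<lambda>p. f p + g p)"
  proof -
    have r: "(\<lambda>p. ?r p + ?s p) \<in> fgen M N" using rep_tcls f g by (intro fgen_add) auto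
    have s: "(\<lambda>p. f p + g p) \<in> fgen M N" using f g by (intro fgen_add)
    have e: "(\<lambda>p. ?r p + ?s p - (f p + g p)) = (\<lambda>p. (?r p - f p) + (?s p - g p))" by auto
    have "(\<lambda>p. ?r p + ?s p - (f p + g p)) \<in> trel M N"
      unfolding e using rep_tcls(2)[OF f] rep_tcls(2)[OF g] by (rule trel.add)
    then show ?thesis using tcls_eq_iff[OF r s] by simp
  qed
  finally show ?thesis .
qed

lemma tensor_zero: "\<zero>\<^bsub>tensor M N\<^esub> = tcls M N (\<lambda>_. 0)"
  by (simp add: tensor_def)

lemma tensor_abelian:
  shows "abelian_group (tensor M N)"
proof (rule abelian_groupI)
  fix x y assume "x \<in> carrier (tensor M N)" "y \<in> carrier (tensor M N)"
  then obtain f g where f: "f \<in> fgen M N" "x = tcls M N f" and g: "g \<in> fgen M N" "y = tcls M N g"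
    by (auto simp: tensor_carrier)
  show "x \<oplus>\<^bsub>tensor M N\<^esub> y \<in> carrier (tensor M N)"
    using f g by (auto simp: tensor_add_tcls tensor_carrier intro!: fgen_add)
  show "x \<oplus>\<^bsub>tensor M N\<^esub> y = y \<oplus>\<^bsub>tensor M N\<^esub> x"
    using f g by (simp add: tensor_add_tcls add.commute)
next
  show "\<zero>\<^bsub>tensor M N\<^esub> \<in> carrier (tensor M N)"
    by (auto simp: tensor_zero tensor_carrier intro: bexI[of _ "\<lambda>_. 0"])
next
  fix x y z assume "x \<in> carrier (tensor M N)" "y \<in> carrier (tensor M N)" "z \<in> carrier (tensor M N)"
  then obtain f g h where f: "f \<in> fgen M N" "x = tcls M N f" and g: "g \<in> fgen M N" "y = tcls M N g"
    and h: "h \<in> fgen M N" "z = tcls M N h"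
    by (auto simp: tensor_carrier)
  show "x \<oplus>\<^bsub>tensor M N\<^esub> y \<oplus>\<^bsub>tensor M N\<^esub> z = x \<oplus>\<^bsub>tensor M N\<^esub> (y \<oplus>\<^bsub>tensor M N\<^esub> z)"
    using f g h by (simp add: tensor_add_tcls fgen_add add.assoc)
next
  fix x assume "x \<in> carrier (tensor M N)"
  then obtain f where f: "f \<in> fgen M N" "x = tcls M N f" by (auto simp: tensor_carrier)
  show "\<zero>\<^bsub>tensor M N\<^esub> \<oplus>\<^bsub>tensor M N\<^esub> x = x"
    using f by (simp add: tensor_zero tensor_add_tcls)
  have "tcls M N (\<lambda>p. - f p) \<oplus>\<^bsub>tensor M N\<^esub> x = \<zero>\<^bsub>tensor M N\<^esub>"
    using f by (simp add: tensor_zero tensor_add_tcls fgen_neg)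
  moreover have "tcls M N (\<lambda>p. - f p) \<in> carrier (tensor M N)"
    using f by (auto simp: tensor_carrier intro: fgen_neg)
  ultimately show "\<exists>y\<in>carrier (tensor M N). y \<oplus>\<^bsub>tensor M N\<^esub> x = \<zero>\<^bsub>tensor M N\<^esub>" by blast
qed




lemma add_pow_int0[simp]: "[(0::int)] \<cdot>\<^bsub>T\<^esub> x = \<zero>\<^bsub>T\<^esub>"
  by (simp add: add_pow_def)

lemma ag_cancel3:
  assumes "abelian_group T" "x \<in> carrier T" "y \<in> carrier T"
  shows "(x \<oplus>\<^bsub>T\<^esub> y) \<ominus>\<^bsub>T\<^esub> x \<ominus>\<^bsub>T\<^esub> y = \<zero>\<^bsub>T\<^esub>"
proof -
  interpret abelian_group T by fact
  have "(x \<oplus>\<^bsub>T\<^esub> y) \<ominus>\<^bsub>T\<^esub> x \<ominus>\<^bsub>T\<^esub> y = (x \<oplus>\<^bsub>T\<^esub> y) \<oplus>\<^bsub>T\<^esub> (\<ominus>\<^bsub>T\<^esub> x \<oplus>\<^bsub>T\<^esub> \<ominus>\<^bsub>T\<^esub> y)"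
    using assms by (simp add: a_minus_def a_assoc)
  also have "\<dots> = (x \<oplus>\<^bsub>T\<^esub> y) \<oplus>\<^bsub>T\<^esub> \<ominus>\<^bsub>T\<^esub> (x \<oplus>\<^bsub>T\<^esub> y)"
    using assms by (simp add: minus_add a_comm)
  also have "\<dots> = \<zero>\<^bsub>T\<^esub>" using assms by (simp add: r_neg)
  finally show ?thesis .
qed

lemma ag_minus_self:
  assumes "abelian_group T" "x \<in> carrier T"
  shows "x \<ominus>\<^bsub>T\<^esub> x = \<zero>\<^bsub>T\<^esub>"
proof -
  interpret abelian_group T by fact
  show ?thesis using assms by (simp add: a_minus_def r_neg)
qed

lemma ag_minus_zero_eq:
  assumes "abelian_group T" "x \<in> carrier T" "y \<in> carrier T" "x \<ominus>\<^bsub>T\<^esub> y = \<zero>\<^bsub>T\<^esub>"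
  shows "x = y"
proof -
  interpret abelian_group T by fact
  have "(x \<ominus>\<^bsub>T\<^esub> y) \<oplus>\<^bsub>T\<^esub> y = x" using assms(2,3) by (simp add: a_minus_def a_assoc l_neg)
  then show ?thesis using assms by simp
qed

definition Ssum :: "('t, 'z) ring_scheme \<Rightarrow> ('m \<Rightarrow> 'n \<Rightarrow> 't) \<Rightarrow> ('m \<times> 'n \<Rightarrow> int) \<Rightarrow> 't" where
  "Ssum T \<beta> f = (\<Oplus>\<^bsub>T\<^esub> p\<in>{p. f p \<noteq> 0}. [f p] \<cdot>\<^bsub>T\<^esub> \<beta> (fst p) (snd p))"

lemma tlift_Ssum: "tlift T \<beta> X = Ssum T \<beta> (rep X)"
  by (simp add: tlift_def Ssum_def)

definition bil :: "('a::ring_1, 'm, 'x) bimod_scheme \<Rightarrow> ('a, 'n, 'y) bimod_scheme \<Rightarrow> ('t, 'z) ring_scheme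
    \<Rightarrow> ('m \<Rightarrow> 'n \<Rightarrow> 't) \<Rightarrow> bool" where
  "bil M N T \<beta> \<longleftrightarrow> abelian_group T \<and> (\<forall>m\<in>carrier M. \<forall>n\<in>carrier N. \<beta> m n \<in> carrier T) \<and>
     (\<forall>m\<in>carrier M. \<forall>m'\<in>carrier M. \<forall>n\<in>carrier N. \<beta> (m \<oplus>\<^bsub>M\<^esub> m') n = \<beta> m n \<oplus>\<^bsub>T\<^esub> \<beta> m' n) \<and>
     (\<forall>m\<in>carrier M. \<forall>n\<in>carrier N. \<forall>n'\<in>carrier N. \<beta> m (n \<oplus>\<^bsub>N\<^esub> n') = \<beta> m n \<oplus>\<^bsub>T\<^esub> \<beta> m n') \<and>
     (\<forall>m\<in>carrier M. \<forall>n\<in>carrier N. \<forall>a. \<beta> (ract M m a) n = \<beta> m (lact N a n))"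

lemma bilI:
  assumes "abelian_group T"
    "\<And>m n. m \<in> carrier M \<Longrightarrow> n \<in> carrier N \<Longrightarrow> \<beta> m n \<in> carrier T"
    "\<And>m m' n. m \<in> carrier M \<Longrightarrow> m' \<in> carrier M \<Longrightarrow> n \<in> carrier N \<Longrightarrow> \<beta> (m \<oplus>\<^bsub>M\<^esub> m') n = \<beta> m n \<oplus>\<^bsub>T\<^esub> \<beta> m' n"
    "\<And>m n n'. m \<in> carrier M \<Longrightarrow> n \<in> carrier N \<Longrightarrow> n' \<in> carrier N \<Longrightarrow> \<beta> m (n \<oplus>\<^bsub>N\<^esub> n') = \<beta> m n \<oplus>\<^bsub>T\<^esub> \<beta> m n'"
    "\<And>m n a. m \<in> carrier M \<Longrightarrow> n \<in> carrier N \<Longrightarrow> \<beta> (ract M m a) n = \<beta> m (lact N a n)"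
  shows "bil M N T \<beta>"
  using assms unfolding bil_def by blast

lemma bilD:
  assumes "bil M N T \<beta>"
  shows "abelian_group T"
    "\<And>m n. m \<in> carrier M \<Longrightarrow> n \<in> carrier N \<Longrightarrow> \<beta> m n \<in> carrier T"
    "\<And>m m' n. m \<in> carrier M \<Longrightarrow> m' \<in> carrier M \<Longrightarrow> n \<in> carrier N \<Longrightarrow> \<beta> (m \<oplus>\<^bsub>M\<^esub> m') n = \<beta> m n \<oplus>\<^bsub>T\<^esub> \<beta> m' n"
    "\<And>m n n'. m \<in> carrier M \<Longrightarrow> n \<in> carrier N \<Longrightarrow> n' \<in> carrier N \<Longrightarrow> \<beta> m (n \<oplus>\<^bsub>N\<^esub> n') = \<beta> m n \<oplus>\<^bsub>T\<^esub> \<beta> m n'"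
    "\<And>m n a. m \<in> carrier M \<Longrightarrow> n \<in> carrier N \<Longrightarrow> \<beta> (ract M m a) n = \<beta> m (lact N a n)"
  using assms unfolding bil_def by blast+

definition bclosed :: "('a, 'm, 'x) bimod_scheme \<Rightarrow> ('a, 'n, 'y) bimod_scheme \<Rightarrow> ('t, 'z) ring_scheme
    \<Rightarrow> ('m \<Rightarrow> 'n \<Rightarrow> 't) \<Rightarrow> bool" where
  "bclosed M N T \<beta> \<longleftrightarrow> (\<forall>m\<in>carrier M. \<forall>n\<in>carrier N. \<beta> m n \<in> carrier T)"

lemma bil_bclosed: "bil M N T \<beta> \<Longrightarrow> bclosed M N T \<beta>"
  by (simp add: bil_def bclosed_def)

lemma Ssum_superset:
  assumes ag: "abelian_group T" and cl0: "bclosed M N T \<beta>"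
    and f: "f \<in> fgen M N" and D: "finite D" "{p. f p \<noteq> 0} \<subseteq> D" "D \<subseteq> carrier M \<times> carrier N"
  shows "Ssum T \<beta> f = (\<Oplus>\<^bsub>T\<^esub> p\<in>D. [f p] \<cdot>\<^bsub>T\<^esub> \<beta> (fst p) (snd p))"
proof -
  have cl: "\<And>m n. m \<in> carrier M \<Longrightarrow> n \<in> carrier N \<Longrightarrow> \<beta> m n \<in> carrier T" using cl0 by (auto simp: bclosed_def)
  interpret abelian_group T by (rule ag)
  show ?thesis unfolding Ssum_def
    by (rule add.finprod_mono_neutral_cong_left) (use D cl in auto)
qed

lemma Ssum_closed:
  assumes ag: "abelian_group T" and cl0: "bclosed M N T \<beta>"
    and f: "f \<in> fgen M N"
  shows "Ssum T \<beta> f \<in> carrier T"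
proof -
  have cl: "\<And>m n. m \<in> carrier M \<Longrightarrow> n \<in> carrier N \<Longrightarrow> \<beta> m n \<in> carrier T" using cl0 by (auto simp: bclosed_def)
  interpret abelian_group T by (rule ag)
  show ?thesis unfolding Ssum_def using f cl by (intro finsum_closed) (auto simp: fgen_def)
qed

lemma Ssum_add:
  assumes ag: "abelian_group T" and cl0: "bclosed M N T \<beta>"
    and f: "f \<in> fgen M N" and g: "g \<in> fgen M N"
  shows "Ssum T \<beta> (\<lambda>p. f p + g p) = Ssum T \<beta> f \<oplus>\<^bsub>T\<^esub> Ssum T \<beta> g"
proof -
  have cl: "\<And>m n. m \<in> carrier M \<Longrightarrow> n \<in> carrier N \<Longrightarrow> \<beta> m n \<in> carrier T" using cl0 by (auto simp: bclosed_def)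
  interpret abelian_group T by (rule ag)
  let ?D = "{p. f p \<noteq> 0} \<union> {p. g p \<noteq> 0}"
  have D: "finite ?D" "?D \<subseteq> carrier M \<times> carrier N" using f g by (auto simp: fgen_def)
  have fg: "(\<lambda>p. f p + g p) \<in> fgen M N" using f g by (rule fgen_add)
  have "Ssum T \<beta> (\<lambda>p. f p + g p) = (\<Oplus>\<^bsub>T\<^esub> p\<in>?D. [(f p + g p)] \<cdot>\<^bsub>T\<^esub> \<beta> (fst p) (snd p))"
    by (rule Ssum_superset[OF ag cl0 fg]) (use D in auto)
  also have "\<dots> = (\<Oplus>\<^bsub>T\<^esub> p\<in>?D. [f p] \<cdot>\<^bsub>T\<^esub> \<beta> (fst p) (snd p) \<oplus>\<^bsub>T\<^esub> [g p] \<cdot>\<^bsub>T\<^esub> \<beta> (fst p) (snd p))"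
    by (rule finsum_cong') (use D cl in \<open>auto simp: add.int_pow_mult\<close>)
  also have "\<dots> = (\<Oplus>\<^bsub>T\<^esub> p\<in>?D. [f p] \<cdot>\<^bsub>T\<^esub> \<beta> (fst p) (snd p)) \<oplus>\<^bsub>T\<^esub> (\<Oplus>\<^bsub>T\<^esub> p\<in>?D. [g p] \<cdot>\<^bsub>T\<^esub> \<beta> (fst p) (snd p))"
    by (rule finsum_addf) (use D cl in auto)
  also have "\<dots> = Ssum T \<beta> f \<oplus>\<^bsub>T\<^esub> Ssum T \<beta> g"
    using Ssum_superset[OF ag cl0 f, of ?D] Ssum_superset[OF ag cl0 g, of ?D] D by auto
  finally show ?thesis .
qed

lemma Ssum_zero: "abelian_group T \<Longrightarrow> Ssum T \<beta> (\<lambda>_. 0) = \<zero>\<^bsub>T\<^esub>"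
  by (simp add: Ssum_def abelian_monoid.finsum_empty abelian_group.axioms(1))

lemma Ssum_neg:
  assumes ag: "abelian_group T" and cl0: "bclosed M N T \<beta>"
    and f: "f \<in> fgen M N"
  shows "Ssum T \<beta> (\<lambda>p. - f p) = \<ominus>\<^bsub>T\<^esub> Ssum T \<beta> f"
proof -
  have cl: "\<And>m n. m \<in> carrier M \<Longrightarrow> n \<in> carrier N \<Longrightarrow> \<beta> m n \<in> carrier T" using cl0 by (auto simp: bclosed_def)
  interpret abelian_group T by (rule ag)
  have "Ssum T \<beta> (\<lambda>p. - f p) \<oplus>\<^bsub>T\<^esub> Ssum T \<beta> f = Ssum T \<beta> (\<lambda>p. - f p + f p)"
    using Ssum_add[OF ag cl0 fgen_neg[OF f] f] by simp
  also have "\<dots> = \<zero>\<^bsub>T\<^esub>" using Ssum_zero[OF ag] by simp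
  finally have "Ssum T \<beta> (\<lambda>p. - f p) \<oplus>\<^bsub>T\<^esub> Ssum T \<beta> f = \<zero>\<^bsub>T\<^esub>" .
  then show ?thesis
    using Ssum_closed[OF ag cl0 f] Ssum_closed[OF ag cl0 fgen_neg[OF f]]
    by (metis add.inv_equality)
qed

lemma Ssum_diff:
  assumes ag: "abelian_group T" and cl0: "bclosed M N T \<beta>"
    and f: "f \<in> fgen M N" and g: "g \<in> fgen M N"
  shows "Ssum T \<beta> (\<lambda>p. f p - g p) = Ssum T \<beta> f \<ominus>\<^bsub>T\<^esub> Ssum T \<beta> g"
  using Ssum_add[OF ag cl0 f fgen_neg[OF g]] Ssum_neg[OF ag cl0 g] by (simp add: a_minus_def)

lemma Ssum_dlt:
  assumes ag: "abelian_group T" and cl0: "bclosed M N T \<beta>"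
    and p: "p \<in> carrier M \<times> carrier N"
  shows "Ssum T \<beta> (dlt p) = \<beta> (fst p) (snd p)"
proof -
  have cl: "\<And>m n. m \<in> carrier M \<Longrightarrow> n \<in> carrier N \<Longrightarrow> \<beta> m n \<in> carrier T" using cl0 by (auto simp: bclosed_def)
  interpret abelian_group T by (rule ag)
  have "{q. dlt p q \<noteq> 0} = {p}" by (auto simp: dlt_def)
  then show ?thesis using p cl by (auto simp: Ssum_def dlt_def)
qed

lemma Ssum_trel:
  assumes b: "bil M N T \<beta>" and ok: "tens_ok M N" and f: "f \<in> trel M N"
  shows "Ssum T \<beta> f = \<zero>\<^bsub>T\<^esub>"
  using f
proof (induction rule: trel.induct)
  note ag = bilD(1)[OF b] and cl0 = bil_bclosed[OF b]
  have cl: "\<And>m n. m \<in> carrier M \<Longrightarrow> n \<in> carrier N \<Longrightarrow> \<beta> m n \<in> carrier T" using cl0 by (auto simp: bclosed_def)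
  { case zero show ?case by (rule Ssum_zero[OF ag]) }
  { case (add f g)
    interpret abelian_group T by (rule ag)
    show ?case using Ssum_add[OF ag cl0 trel_fgen[OF ok add.hyps(1)] trel_fgen[OF ok add.hyps(2)]] add.IH by simp }
  { case (neg f)
    interpret abelian_group T by (rule ag)
    show ?case using Ssum_neg[OF ag cl0 trel_fgen[OF ok neg.hyps]] neg.IH by simp }
  { case (gen_l m m' n)
    have mm: "m \<oplus>\<^bsub>M\<^esub> m' \<in> carrier M" using ok gen_l unfolding tens_ok_def by (meson abelian_groupE(1))
    have d: "dlt (m \<oplus>\<^bsub>M\<^esub> m', n) \<in> fgen M N" "dlt (m, n) \<in> fgen M N" "dlt (m', n) \<in> fgen M N"
      using gen_l mm by (auto intro: fgen_dlt)
    have "Ssum T \<beta> (\<lambda>p. dlt (m \<oplus>\<^bsub>M\<^esub> m', n) p - dlt (m, n) p - dlt (m', n) p)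
       = \<beta> (m \<oplus>\<^bsub>M\<^esub> m') n \<ominus>\<^bsub>T\<^esub> \<beta> m n \<ominus>\<^bsub>T\<^esub> \<beta> m' n"
      using Ssum_diff[OF ag cl0 fgen_diff[OF d(1) d(2)] d(3)] Ssum_diff[OF ag cl0 d(1) d(2)]
        Ssum_dlt[OF ag cl0] mm gen_l by simp
    also have "\<dots> = \<zero>\<^bsub>T\<^esub>" using bilD(3)[OF b] gen_l ag_cancel3[OF ag] cl by simp
    finally show ?case . }
  { case (gen_r m n n')
    have nn: "n \<oplus>\<^bsub>N\<^esub> n' \<in> carrier N" using ok gen_r unfolding tens_ok_def by (meson abelian_groupE(1))
    have d: "dlt (m, n \<oplus>\<^bsub>N\<^esub> n') \<in> fgen M N" "dlt (m, n) \<in> fgen M N" "dlt (m, n') \<in> fgen M N"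
      using gen_r nn by (auto intro: fgen_dlt)
    have "Ssum T \<beta> (\<lambda>p. dlt (m, n \<oplus>\<^bsub>N\<^esub> n') p - dlt (m, n) p - dlt (m, n') p)
       = \<beta> m (n \<oplus>\<^bsub>N\<^esub> n') \<ominus>\<^bsub>T\<^esub> \<beta> m n \<ominus>\<^bsub>T\<^esub> \<beta> m n'"
      using Ssum_diff[OF ag cl0 fgen_diff[OF d(1) d(2)] d(3)] Ssum_diff[OF ag cl0 d(1) d(2)]
        Ssum_dlt[OF ag cl0] nn gen_r by simp
    also have "\<dots> = \<zero>\<^bsub>T\<^esub>" using bilD(4)[OF b] gen_r ag_cancel3[OF ag] cl by simp
    finally show ?case . }
  { case (gen_bal m n a)
    have c: "ract M m a \<in> carrier M" "lact N a n \<in> carrier N" using ok gen_bal unfolding tens_ok_def by auto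
    have d: "dlt (ract M m a, n) \<in> fgen M N" "dlt (m, lact N a n) \<in> fgen M N"
      using gen_bal c by (auto intro: fgen_dlt)
    have "Ssum T \<beta> (\<lambda>p. dlt (ract M m a, n) p - dlt (m, lact N a n) p)
       = \<beta> (ract M m a) n \<ominus>\<^bsub>T\<^esub> \<beta> m (lact N a n)"
      using Ssum_diff[OF ag cl0 d(1) d(2)] Ssum_dlt[OF ag cl0] c gen_bal by simp
    also have "\<dots> = \<zero>\<^bsub>T\<^esub>" using bilD(5)[OF b] gen_bal ag_minus_self[OF ag] cl c by simp
    finally show ?case . }
qed

lemma Ssum_welldef:
  assumes b: "bil M N T \<beta>" and ok: "tens_ok M N" and f: "f \<in> fgen M N" and g: "g \<in> fgen M N"
    and fg: "(\<lambda>p. f p - g p) \<in> trel M N"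
  shows "Ssum T \<beta> f = Ssum T \<beta> g"
proof -
  note ag = bilD(1)[OF b] and cl0 = bil_bclosed[OF b]
  have cl: "\<And>m n. m \<in> carrier M \<Longrightarrow> n \<in> carrier N \<Longrightarrow> \<beta> m n \<in> carrier T" using cl0 by (auto simp: bclosed_def)
  have "Ssum T \<beta> f \<ominus>\<^bsub>T\<^esub> Ssum T \<beta> g = \<zero>\<^bsub>T\<^esub>"
    using Ssum_diff[OF ag cl0 f g] Ssum_trel[OF b ok fg] by simp
  then show ?thesis using ag_minus_zero_eq[OF ag Ssum_closed[OF ag cl0 f] Ssum_closed[OF ag cl0 g]] by simp
qed

lemma tlift_tcls:
  assumes b: "bil M N T \<beta>" and ok: "tens_ok M N" and f: "f \<in> fgen M N"
  shows "tlift T \<beta> (tcls M N f) = Ssum T \<beta> f"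
  unfolding tlift_Ssum using Ssum_welldef[OF b ok rep_tcls(1)[OF f] f rep_tcls(2)[OF f]] .

lemma rep_fgen: "X \<in> carrier (tensor M N) \<Longrightarrow> rep X \<in> fgen M N"
  by (auto simp: tensor_carrier rep_tcls)

lemma tlift_closed:
  assumes ag: "abelian_group T" and cl0: "bclosed M N T \<beta>"
    and X: "X \<in> carrier (tensor M N)"
  shows "tlift T \<beta> X \<in> carrier T"
  unfolding tlift_Ssum using Ssum_closed[OF ag cl0 rep_fgen[OF X]] .

lemma tlift_add:
  assumes b: "bil M N T \<beta>" and ok: "tens_ok M N"
    and X: "X \<in> carrier (tensor M N)" and Y: "Y \<in> carrier (tensor M N)"
  shows "tlift T \<beta> (X \<oplus>\<^bsub>tensor M N\<^esub> Y) = tlift T \<beta> X \<oplus>\<^bsub>T\<^esub> tlift T \<beta> Y"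
proof -
  obtain f g where f: "f \<in> fgen M N" "X = tcls M N f" and g: "g \<in> fgen M N" "Y = tcls M N g"
    using X Y by (auto simp: tensor_carrier)
  show ?thesis using f g tensor_add_tcls[OF f(1) g(1)] tlift_tcls[OF b ok] fgen_add[OF f(1) g(1)]
      Ssum_add[OF bilD(1)[OF b] bil_bclosed[OF b] f(1) g(1)] by simp
qed

lemma tmk_carrier: "m \<in> carrier M \<Longrightarrow> n \<in> carrier N \<Longrightarrow> tmk M N m n \<in> carrier (tensor M N)"
  unfolding tmk_def tensor_carrier by (auto intro: fgen_dlt)

lemma tlift_tmk:
  assumes b: "bil M N T \<beta>" and ok: "tens_ok M N" and m: "m \<in> carrier M" and n: "n \<in> carrier N"
  shows "tlift T \<beta> (tmk M N m n) = \<beta> m n"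
proof -
  show ?thesis unfolding tmk_def using tlift_tcls[OF b ok fgen_dlt[of "(m,n)"]] Ssum_dlt[OF bilD(1)[OF b] bil_bclosed[OF b], of "(m,n)"] m n by simp
qed

lemma bil_tmk:
  assumes ok: "tens_ok M N"
  shows "bil M N (tensor M N) (tmk M N)"
proof (rule bilI)
  show "abelian_group (tensor M N)" by (rule tensor_abelian)
  show "\<And>m n. m \<in> carrier M \<Longrightarrow> n \<in> carrier N \<Longrightarrow> tmk M N m n \<in> carrier (tensor M N)" by (rule tmk_carrier)
next
  fix m m' n assume a: "m \<in> carrier M" "m' \<in> carrier M" "n \<in> carrier N"
  have mm: "m \<oplus>\<^bsub>M\<^esub> m' \<in> carrier M" using ok a unfolding tens_ok_def by (meson abelian_groupE(1))
  have e: "(\<lambda>p. dlt (m \<oplus>\<^bsub>M\<^esub> m', n) p - (dlt (m, n) p + dlt (m', n) p)) = (\<lambda>p. dlt (m \<oplus>\<^bsub>M\<^esub> m', n) p - dlt (m, n) p - dlt (m', n) p)"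
    by auto
  have "tcls M N (dlt (m \<oplus>\<^bsub>M\<^esub> m', n)) = tcls M N (\<lambda>p. dlt (m, n) p + dlt (m', n) p)"
    using tcls_eq_iff[of "dlt (m \<oplus>\<^bsub>M\<^esub> m', n)" M N "\<lambda>p. dlt (m, n) p + dlt (m', n) p"] trel.gen_l[OF a] mm a
    by (simp add: fgen_dlt fgen_add e)
  then show "tmk M N (m \<oplus>\<^bsub>M\<^esub> m') n = tmk M N m n \<oplus>\<^bsub>tensor M N\<^esub> tmk M N m' n"
    unfolding tmk_def using tensor_add_tcls[of "dlt (m,n)" M N "dlt (m',n)"] a by (simp add: fgen_dlt)
next
  fix m n n' assume a: "m \<in> carrier M" "n \<in> carrier N" "n' \<in> carrier N"
  have nn: "n \<oplus>\<^bsub>N\<^esub> n' \<in> carrier N" using ok a unfolding tens_ok_def by (meson abelian_groupE(1))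
  have e: "(\<lambda>p. dlt (m, n \<oplus>\<^bsub>N\<^esub> n') p - (dlt (m, n) p + dlt (m, n') p)) = (\<lambda>p. dlt (m, n \<oplus>\<^bsub>N\<^esub> n') p - dlt (m, n) p - dlt (m, n') p)"
    by auto
  have "tcls M N (dlt (m, n \<oplus>\<^bsub>N\<^esub> n')) = tcls M N (\<lambda>p. dlt (m, n) p + dlt (m, n') p)"
    using tcls_eq_iff[of "dlt (m, n \<oplus>\<^bsub>N\<^esub> n')" M N "\<lambda>p. dlt (m, n) p + dlt (m, n') p"] trel.gen_r[OF a] nn a
    by (simp add: fgen_dlt fgen_add e)
  then show "tmk M N m (n \<oplus>\<^bsub>N\<^esub> n') = tmk M N m n \<oplus>\<^bsub>tensor M N\<^esub> tmk M N m n'"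
    unfolding tmk_def using tensor_add_tcls[of "dlt (m,n)" M N "dlt (m,n')"] a by (simp add: fgen_dlt)
next
  fix m n a assume a: "m \<in> carrier M" "n \<in> carrier N"
  have c: "ract M m a \<in> carrier M" "lact N a n \<in> carrier N" using ok a unfolding tens_ok_def by auto
  show "tmk M N (ract M m a) n = tmk M N m (lact N a n)"
    unfolding tmk_def using tcls_eq_iff[of "dlt (ract M m a, n)" M N "dlt (m, lact N a n)"] trel.gen_bal[OF a, of a] c a
    by (simp add: fgen_dlt)
qed




lemma tcls_carrier[intro, simp]: "f \<in> fgen M N \<Longrightarrow> tcls M N f \<in> carrier (tensor M N)"
  by (auto simp: tensor_carrier)

lemma tensor_neg:
  assumes f: "f \<in> fgen M N"
  shows "\<ominus>\<^bsub>tensor M N\<^esub> tcls M N f = tcls M N (\<lambda>p. - f p)"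
proof -
  interpret abelian_group "tensor M N" by (rule tensor_abelian)
  have "tcls M N (\<lambda>p. - f p) \<oplus>\<^bsub>tensor M N\<^esub> tcls M N f = \<zero>\<^bsub>tensor M N\<^esub>"
    using f by (simp add: tensor_add_tcls fgen_neg tensor_zero)
  moreover have "tcls M N f \<in> carrier (tensor M N)" "tcls M N (\<lambda>p. - f p) \<in> carrier (tensor M N)"
    using f fgen_neg[OF f] by (auto simp: tensor_carrier)
  ultimately show ?thesis by (metis add.inv_equality)
qed

lemma tensor_pow_nat:
  assumes f: "f \<in> fgen M N"
  shows "[(n::nat)] \<cdot>\<^bsub>tensor M N\<^esub> tcls M N f = tcls M N (\<lambda>p. int n * f p)"
proof (induction n)
  interpret abelian_group "tensor M N" by (rule tensor_abelian)
  { case 0 show ?case by (simp add: tensor_zero) }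
  { case (Suc n)
    have "[Suc n] \<cdot>\<^bsub>tensor M N\<^esub> tcls M N f = [n] \<cdot>\<^bsub>tensor M N\<^esub> tcls M N f \<oplus>\<^bsub>tensor M N\<^esub> tcls M N f"
      by (simp add: add.nat_pow_Suc)
    also have "\<dots> = tcls M N (\<lambda>p. int n * f p + f p)" using Suc tensor_add_tcls[OF fgen_scale[OF f] f] by simp
    also have "(\<lambda>p. int n * f p + f p) = (\<lambda>p. int (Suc n) * f p)" by (auto simp: algebra_simps)
    finally show ?case . }
qed

lemma tensor_pow:
  assumes f: "f \<in> fgen M N"
  shows "[(k::int)] \<cdot>\<^bsub>tensor M N\<^esub> tcls M N f = tcls M N (\<lambda>p. k * f p)"
proof (cases "k \<ge> 0")
  case True
  then show ?thesis using tensor_pow_nat[OF f, of "nat k"] by (simp add: add_pow_int_ge)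
next
  case False
  then have "[k] \<cdot>\<^bsub>tensor M N\<^esub> tcls M N f = \<ominus>\<^bsub>tensor M N\<^esub> tcls M N (\<lambda>p. int (nat (- k)) * f p)"
    using tensor_pow_nat[OF f, of "nat (-k)"] by (simp add: add_pow_int_lt)
  also have "\<dots> = tcls M N (\<lambda>p. k * f p)" using False tensor_neg[OF fgen_scale[OF f, of "int (nat (-k))"]] by simp
  finally show ?thesis .
qed

lemma tensor_finsum:
  assumes I: "finite I" and F: "\<And>i. i \<in> I \<Longrightarrow> F i \<in> fgen M N"
  shows "finsum (tensor M N) (\<lambda>i. tcls M N (F i)) I = tcls M N (\<lambda>p. \<Sum>i\<in>I. F i p)"
  using I F
proof (induction I rule: finite_induct)
  interpret abelian_group "tensor M N" by (rule tensor_abelian)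
  { case empty show ?case by (simp add: tensor_zero) }
  { case (insert x I)
    have c: "(\<lambda>i. tcls M N (F i)) \<in> I \<rightarrow> carrier (tensor M N)" "tcls M N (F x) \<in> carrier (tensor M N)"
      using insert.prems by auto
    have "finsum (tensor M N) (\<lambda>i. tcls M N (F i)) (insert x I) = tcls M N (F x) \<oplus>\<^bsub>tensor M N\<^esub> finsum (tensor M N) (\<lambda>i. tcls M N (F i)) I"
      using insert.hyps c by (simp add: finsum_insert)
    also have "\<dots> = tcls M N (\<lambda>p. F x p + (\<Sum>i\<in>I. F i p))"
    proof -
      have a: "F x \<in> fgen M N" using insert.prems by simp
      have b: "(\<lambda>p. \<Sum>i\<in>I. F i p) \<in> fgen M N" using insert.prems insert.hyps by (intro fgen_sum) auto
      show ?thesis using insert.IH insert.prems tensor_add_tcls[OF a b] by simp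
    qed
    finally show ?case using insert.hyps by simp }
qed

lemma tensor_dec:
  assumes f: "f \<in> fgen M N"
  shows "tcls M N f = finsum (tensor M N) (\<lambda>p. [f p] \<cdot>\<^bsub>tensor M N\<^esub> tmk M N (fst p) (snd p)) {p. f p \<noteq> 0}"
proof -
  let ?S = "{p. f p \<noteq> 0}"
  have S: "finite ?S" "?S \<subseteq> carrier M \<times> carrier N" using f by (auto simp: fgen_def)
  interpret abelian_group "tensor M N" by (rule tensor_abelian)
  have "finsum (tensor M N) (\<lambda>p. [f p] \<cdot>\<^bsub>tensor M N\<^esub> tmk M N (fst p) (snd p)) ?S
      = finsum (tensor M N) (\<lambda>p. tcls M N (\<lambda>q. f p * dlt p q)) ?S"
  proof (rule finsum_cong')
    show "\<And>p. p \<in> ?S \<Longrightarrow> [f p] \<cdot>\<^bsub>tensor M N\<^esub> tmk M N (fst p) (snd p) = tcls M N (\<lambda>q. f p * dlt p q)"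
      using S by (auto simp: tmk_def intro!: tensor_pow fgen_dlt)
    show "(\<lambda>p. tcls M N (\<lambda>q. f p * dlt p q)) \<in> ?S \<rightarrow> carrier (tensor M N)"
      using S by (auto intro!: tcls_carrier fgen_scale fgen_dlt)
  qed simp
  also have "\<dots> = tcls M N (\<lambda>q. \<Sum>p\<in>?S. f p * dlt p q)"
    using S by (intro tensor_finsum) (auto intro!: fgen_scale fgen_dlt)
  also have "(\<lambda>q. \<Sum>p\<in>?S. f p * dlt p q) = f"
  proof
    fix q
    have "(\<Sum>p\<in>?S. f p * dlt p q) = (\<Sum>p\<in>?S. if q = p then f p else 0)"
      by (rule sum.cong) (auto simp: dlt_def)
    also have "\<dots> = f q" using S(1) by (simp add: sum.delta)
    finally show "(\<Sum>p\<in>?S. f p * dlt p q) = f q" .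
  qed
  finally show ?thesis by simp
qed

definition addhom :: "('g, 'u) ring_scheme \<Rightarrow> ('h, 'v) ring_scheme \<Rightarrow> ('g \<Rightarrow> 'h) \<Rightarrow> bool" where
  "addhom G H F \<longleftrightarrow> (\<forall>x\<in>carrier G. F x \<in> carrier H) \<and>
     (\<forall>x\<in>carrier G. \<forall>y\<in>carrier G. F (x \<oplus>\<^bsub>G\<^esub> y) = F x \<oplus>\<^bsub>H\<^esub> F y)"

lemma addhomI:
  assumes "\<And>x. x \<in> carrier G \<Longrightarrow> F x \<in> carrier H"
    "\<And>x y. x \<in> carrier G \<Longrightarrow> y \<in> carrier G \<Longrightarrow> F (x \<oplus>\<^bsub>G\<^esub> y) = F x \<oplus>\<^bsub>H\<^esub> F y"
  shows "addhom G H F"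
  using assms by (simp add: addhom_def)

lemma addhomD:
  assumes "addhom G H F"
  shows "\<And>x. x \<in> carrier G \<Longrightarrow> F x \<in> carrier H"
    "\<And>x y. x \<in> carrier G \<Longrightarrow> y \<in> carrier G \<Longrightarrow> F (x \<oplus>\<^bsub>G\<^esub> y) = F x \<oplus>\<^bsub>H\<^esub> F y"
  using assms by (auto simp: addhom_def)

lemma addhom_comp:
  "addhom G H F \<Longrightarrow> addhom H K F' \<Longrightarrow> addhom G K (\<lambda>x. F' (F x))"
  by (simp add: addhom_def)

lemma addhom_pow:
  assumes G: "abelian_group G" and H: "abelian_group H" and F: "addhom G H F" and x: "x \<in> carrier G"
  shows "F ([(k::int)] \<cdot>\<^bsub>G\<^esub> x) = [k] \<cdot>\<^bsub>H\<^esub> F x"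
proof -
  have h: "F \<in> hom (add_monoid G) (add_monoid H)"
    using F by (auto simp: hom_def addhom_def)
  have "F (pow (add_monoid G) x k) = pow (add_monoid H) (F x) k"
    by (rule hom_int_pow[OF h]) (use x abelian_group.a_group[OF G] abelian_group.a_group[OF H] in auto)
  then show ?thesis by (simp add: add_pow_def)
qed

lemma addhom_zero:
  assumes G: "abelian_group G" and H: "abelian_group H" and F: "addhom G H F"
  shows "F \<zero>\<^bsub>G\<^esub> = \<zero>\<^bsub>H\<^esub>"
proof -
  have "F ([(0::int)] \<cdot>\<^bsub>G\<^esub> \<zero>\<^bsub>G\<^esub>) = [(0::int)] \<cdot>\<^bsub>H\<^esub> F \<zero>\<^bsub>G\<^esub>"
    by (rule addhom_pow[OF G H F]) (simp add: abelian_group.axioms(1)[OF G] abelian_monoid.zero_closed)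
  then show ?thesis by simp
qed

lemma addhom_finsum:
  assumes G: "abelian_group G" and H: "abelian_group H" and F: "addhom G H F"
    and I: "finite I" and f: "f \<in> I \<rightarrow> carrier G"
  shows "F (finsum G f I) = finsum H (\<lambda>i. F (f i)) I"
  using I f
proof (induction I rule: finite_induct)
  interpret G: abelian_group G by fact
  interpret H: abelian_group H by fact
  { case empty show ?case using addhom_zero[OF G H F] by simp }
  { case (insert x I)
    have fx: "f x \<in> carrier G" and fI: "f \<in> I \<rightarrow> carrier G" using insert.prems by auto
    have "F (finsum G f (insert x I)) = F (f x \<oplus>\<^bsub>G\<^esub> finsum G f I)"
      using insert.hyps fx fI by (simp add: G.finsum_insert)
    also have "\<dots> = F (f x) \<oplus>\<^bsub>H\<^esub> finsum H (\<lambda>i. F (f i)) I"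
      using addhomD(2)[OF F fx G.finsum_closed[OF fI]] insert.IH[OF fI] by simp
    also have "\<dots> = finsum H (\<lambda>i. F (f i)) (insert x I)"
      using insert.hyps fx fI addhomD(1)[OF F] by (subst H.finsum_insert) auto
    finally show ?case . }
qed

lemma ext_tensor:
  assumes T: "abelian_group T" and F: "addhom (tensor M N) T F" and G: "addhom (tensor M N) T G"
    and gen: "\<And>m n. m \<in> carrier M \<Longrightarrow> n \<in> carrier N \<Longrightarrow> F (tmk M N m n) = G (tmk M N m n)"
    and X: "X \<in> carrier (tensor M N)"
  shows "F X = G X"
proof -
  interpret abelian_group T by fact
  interpret TT: abelian_group "tensor M N" by (rule tensor_abelian)
  obtain f where f: "f \<in> fgen M N" "X = tcls M N f" using X by (auto simp: tensor_carrier)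
  let ?S = "{p. f p \<noteq> 0}"
  have S: "finite ?S" "?S \<subseteq> carrier M \<times> carrier N" using f by (auto simp: fgen_def)
  have c: "(\<lambda>p. [f p] \<cdot>\<^bsub>tensor M N\<^esub> tmk M N (fst p) (snd p)) \<in> ?S \<rightarrow> carrier (tensor M N)"
    using S by (auto intro!: tmk_carrier TT.add.int_pow_closed)
  have "F X = finsum T (\<lambda>p. F ([f p] \<cdot>\<^bsub>tensor M N\<^esub> tmk M N (fst p) (snd p))) ?S"
    unfolding f(2) tensor_dec[OF f(1)] by (rule addhom_finsum[OF tensor_abelian T F S(1) c])
  also have "\<dots> = finsum T (\<lambda>p. G ([f p] \<cdot>\<^bsub>tensor M N\<^esub> tmk M N (fst p) (snd p))) ?S"
    using S addhom_pow[OF tensor_abelian T F] addhom_pow[OF tensor_abelian T G] gen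
      addhomD(1)[OF G] c
    by (intro finsum_cong') (auto simp: tmk_carrier)
  also have "\<dots> = G X"
    unfolding f(2) tensor_dec[OF f(1)] by (rule addhom_finsum[OF tensor_abelian T G S(1) c, symmetric])
  finally show ?thesis .
qed

lemma tlift_hom:
  assumes T: "abelian_group T" and T': "abelian_group T'" and F: "addhom T T' F"
    and cl: "bclosed M N T \<beta>" and X: "X \<in> carrier (tensor M N)"
  shows "F (tlift T \<beta> X) = tlift T' (\<lambda>m n. F (\<beta> m n)) X"
proof -
  interpret abelian_group T by fact
  interpret T': abelian_group T' by fact
  have r: "rep X \<in> fgen M N" by (rule rep_fgen[OF X])
  let ?S = "{p. rep X p \<noteq> 0}"
  have S: "finite ?S" "?S \<subseteq> carrier M \<times> carrier N" using r by (auto simp: fgen_def)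
  have c: "(\<lambda>p. [rep X p] \<cdot>\<^bsub>T\<^esub> \<beta> (fst p) (snd p)) \<in> ?S \<rightarrow> carrier T"
    using S cl by (auto simp: bclosed_def)
  show ?thesis unfolding tlift_def
    using addhom_finsum[OF T T' F S(1) c] addhom_pow[OF T T' F] S cl
    by (auto simp: bclosed_def intro!: T'.finsum_cong' addhomD(1)[OF F] T'.add.int_pow_closed)
qed

lemma tlift_cong:
  assumes T: "abelian_group T" and cl: "bclosed M N T \<beta>" and eq: "\<And>m n. m \<in> carrier M \<Longrightarrow> n \<in> carrier N \<Longrightarrow> \<beta> m n = \<beta>' m n"
    and X: "X \<in> carrier (tensor M N)"
  shows "tlift T \<beta> X = tlift T \<beta>' X"
proof -
  have r: "rep X \<in> fgen M N" by (rule rep_fgen[OF X])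
  interpret abelian_group T by fact
  show ?thesis unfolding tlift_def
    using r eq cl by (intro finsum_cong') (auto simp: fgen_def bclosed_def)
qed

lemma addhom_tlift:
  assumes b: "bil M N T \<beta>" and ok: "tens_ok M N"
  shows "addhom (tensor M N) T (tlift T \<beta>)"
  using tlift_closed[OF bilD(1)[OF b] bil_bclosed[OF b]] tlift_add[OF b ok] by (auto intro!: addhomI)




definition compat :: "('a::ring_1, 'm, 'x) bimod_scheme \<Rightarrow> ('a, 'n, 'y) bimod_scheme
    \<Rightarrow> ('a, 'm2, 'x2) bimod_scheme \<Rightarrow> ('a, 'n2, 'y2) bimod_scheme \<Rightarrow> ('m \<Rightarrow> 'm2) \<Rightarrow> ('n \<Rightarrow> 'n2) \<Rightarrow> bool" where
  "compat M N M' N' \<phi> \<psi> \<longleftrightarrow> (\<forall>m\<in>carrier M. \<phi> m \<in> carrier M') \<and> (\<forall>n\<in>carrier N. \<psi> n \<in> carrier N') \<and>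
     (\<forall>m\<in>carrier M. \<forall>m'\<in>carrier M. \<phi> (m \<oplus>\<^bsub>M\<^esub> m') = \<phi> m \<oplus>\<^bsub>M'\<^esub> \<phi> m') \<and>
     (\<forall>n\<in>carrier N. \<forall>n'\<in>carrier N. \<psi> (n \<oplus>\<^bsub>N\<^esub> n') = \<psi> n \<oplus>\<^bsub>N'\<^esub> \<psi> n') \<and>
     (\<forall>m\<in>carrier M. \<forall>a. \<phi> (ract M m a) = ract M' (\<phi> m) a) \<and>
     (\<forall>n\<in>carrier N. \<forall>a. \<psi> (lact N a n) = lact N' a (\<psi> n))"

lemma fext_superset:
  assumes D: "finite D" "{p. f p \<noteq> 0} \<subseteq> D"
  shows "fext g f = (\<lambda>q. \<Sum>p\<in>D. f p * dlt (g p) q)"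
proof
  fix q
  have "(\<Sum>p\<in>D. f p * dlt (g p) q) = (\<Sum>p\<in>D. if g p = q then f p else 0)"
    by (rule sum.cong) (auto simp: dlt_def)
  also have "\<dots> = (\<Sum>p\<in>{p\<in>D. g p = q}. f p)" using D(1) by (simp add: sum.inter_filter)
  also have "\<dots> = (\<Sum>p\<in>{p. f p \<noteq> 0 \<and> g p = q}. f p)"
    by (rule sum.mono_neutral_right) (use D in auto)
  finally show "fext g f q = (\<Sum>p\<in>D. f p * dlt (g p) q)" by (simp add: fext_def)
qed

lemma fext_add:
  assumes f: "f \<in> fgen M N" and h: "h \<in> fgen M N"
  shows "fext g (\<lambda>p. f p + h p) = (\<lambda>q. fext g f q + fext g h q)"
proof -
  let ?D = "{p. f p \<noteq> 0} \<union> {p. h p \<noteq> 0}"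
  have D: "finite ?D" using f h by (auto simp: fgen_def)
  have s1: "{p. f p + h p \<noteq> 0} \<subseteq> ?D" by auto
  have e1: "fext g (\<lambda>p. f p + h p) = (\<lambda>q. \<Sum>p\<in>?D. (f p + h p) * dlt (g p) q)" by (rule fext_superset[OF D s1])
  have e2: "fext g f = (\<lambda>q. \<Sum>p\<in>?D. f p * dlt (g p) q)" by (rule fext_superset[OF D]) auto
  have e3: "fext g h = (\<lambda>q. \<Sum>p\<in>?D. h p * dlt (g p) q)" by (rule fext_superset[OF D]) auto
  show ?thesis unfolding e1 e2 e3 by (simp add: distrib_right sum.distrib)
qed

lemma fext_neg:
  assumes f: "f \<in> fgen M N"
  shows "fext g (\<lambda>p. - f p) = (\<lambda>q. - fext g f q)"
proof -
  have D: "finite {p. f p \<noteq> 0}" using f by (auto simp: fgen_def)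
  have e1: "fext g (\<lambda>p. - f p) = (\<lambda>q. \<Sum>p\<in>{p. f p \<noteq> 0}. (- f p) * dlt (g p) q)" by (rule fext_superset[OF D]) auto
  have e2: "fext g f = (\<lambda>q. \<Sum>p\<in>{p. f p \<noteq> 0}. f p * dlt (g p) q)" by (rule fext_superset[OF D]) auto
  show ?thesis unfolding e1 e2 by (simp add: sum_negf)
qed

lemma fext_diff:
  assumes f: "f \<in> fgen M N" and h: "h \<in> fgen M N"
  shows "fext g (\<lambda>p. f p - h p) = (\<lambda>q. fext g f q - fext g h q)"
  using fext_add[OF f fgen_neg[OF h], of g] fext_neg[OF h, of g] by simp

lemma fext_dlt: "fext g (dlt p) = dlt (g p)"
proof -
  have "{q. dlt p q \<noteq> 0} = {p}" by (auto simp: dlt_def)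
  then show ?thesis using fext_superset[of "{p}" "dlt p" g] by (auto simp: dlt_def)
qed

lemma fext_zero: "fext g (\<lambda>_. 0) = (\<lambda>_. 0)"
  by (simp add: fext_def)

lemma fext_fgen:
  assumes f: "f \<in> fgen M N" and g: "\<And>p. p \<in> carrier M \<times> carrier N \<Longrightarrow> g p \<in> carrier M' \<times> carrier N'"
  shows "fext g f \<in> fgen M' N'"
proof -
  have sub: "{q. fext g f q \<noteq> 0} \<subseteq> g ` {p. f p \<noteq> 0}"
  proof (rule subsetI, rule ccontr)
    fix q assume q: "q \<in> {q. fext g f q \<noteq> 0}" and nq: "q \<notin> g ` {p. f p \<noteq> 0}"
    have e: "{p. f p \<noteq> 0 \<and> g p = q} = {}" using nq by blast
    have "fext g f q = 0" unfolding fext_def e by simp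
    then show False using q by simp
  qed
  have "finite (g ` {p. f p \<noteq> 0})" using f by (auto simp: fgen_def)
  moreover have "g ` {p. f p \<noteq> 0} \<subseteq> carrier M' \<times> carrier N'" using f g by (force simp: fgen_def)
  ultimately show ?thesis using sub unfolding fgen_iff by (meson finite_subset subset_trans)
qed

lemma compatD:
  assumes "compat M N M' N' \<phi> \<psi>"
  shows "\<And>m. m \<in> carrier M \<Longrightarrow> \<phi> m \<in> carrier M'" "\<And>n. n \<in> carrier N \<Longrightarrow> \<psi> n \<in> carrier N'"
    "\<And>m m'. m \<in> carrier M \<Longrightarrow> m' \<in> carrier M \<Longrightarrow> \<phi> (m \<oplus>\<^bsub>M\<^esub> m') = \<phi> m \<oplus>\<^bsub>M'\<^esub> \<phi> m'"
    "\<And>n n'. n \<in> carrier N \<Longrightarrow> n' \<in> carrier N \<Longrightarrow> \<psi> (n \<oplus>\<^bsub>N\<^esub> n') = \<psi> n \<oplus>\<^bsub>N'\<^esub> \<psi> n'"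
    "\<And>m a. m \<in> carrier M \<Longrightarrow> \<phi> (ract M m a) = ract M' (\<phi> m) a"
    "\<And>n a. n \<in> carrier N \<Longrightarrow> \<psi> (lact N a n) = lact N' a (\<psi> n)"
  using assms unfolding compat_def by blast+

lemma compatI:
  assumes "\<And>m. m \<in> carrier M \<Longrightarrow> \<phi> m \<in> carrier M'" "\<And>n. n \<in> carrier N \<Longrightarrow> \<psi> n \<in> carrier N'"
    "\<And>m m'. m \<in> carrier M \<Longrightarrow> m' \<in> carrier M \<Longrightarrow> \<phi> (m \<oplus>\<^bsub>M\<^esub> m') = \<phi> m \<oplus>\<^bsub>M'\<^esub> \<phi> m'"
    "\<And>n n'. n \<in> carrier N \<Longrightarrow> n' \<in> carrier N \<Longrightarrow> \<psi> (n \<oplus>\<^bsub>N\<^esub> n') = \<psi> n \<oplus>\<^bsub>N'\<^esub> \<psi> n'"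
    "\<And>m a. m \<in> carrier M \<Longrightarrow> \<phi> (ract M m a) = ract M' (\<phi> m) a"
    "\<And>n a. n \<in> carrier N \<Longrightarrow> \<psi> (lact N a n) = lact N' a (\<psi> n)"
  shows "compat M N M' N' \<phi> \<psi>"
  using assms unfolding compat_def by blast

lemma fext_trel:
  assumes ok: "tens_ok M N" and c: "compat M N M' N' \<phi> \<psi>" and f: "f \<in> trel M N"
  shows "fext (\<lambda>(m, n). (\<phi> m, \<psi> n)) f \<in> trel M' N'"
  using f
proof (induction rule: trel.induct)
  let ?g = "\<lambda>(m, n). (\<phi> m, \<psi> n)"
  { case zero show ?case by (simp add: fext_zero trel.zero) }
  { case (add f h) show ?case using fext_add[OF trel_fgen[OF ok add.hyps(1)] trel_fgen[OF ok add.hyps(2)], of ?g]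
      trel.add[OF add.IH] by simp }
  { case (neg f) show ?case using fext_neg[OF trel_fgen[OF ok neg.hyps], of ?g] trel.neg[OF neg.IH] by simp }
  { case (gen_l m m' n)
    have mm: "m \<oplus>\<^bsub>M\<^esub> m' \<in> carrier M" using ok gen_l unfolding tens_ok_def by (meson abelian_groupE(1))
    have d: "dlt (m \<oplus>\<^bsub>M\<^esub> m', n) \<in> fgen M N" "dlt (m, n) \<in> fgen M N" "dlt (m', n) \<in> fgen M N"
      using gen_l mm by (auto intro: fgen_dlt)
    have "fext ?g (\<lambda>p. dlt (m \<oplus>\<^bsub>M\<^esub> m', n) p - dlt (m, n) p - dlt (m', n) p)
        = (\<lambda>q. dlt (\<phi> m \<oplus>\<^bsub>M'\<^esub> \<phi> m', \<psi> n) q - dlt (\<phi> m, \<psi> n) q - dlt (\<phi> m', \<psi> n) q)"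
      using fext_diff[OF fgen_diff[OF d(1) d(2)] d(3), of ?g] fext_diff[OF d(1) d(2), of ?g]
        compatD(3)[OF c] gen_l by (simp add: fext_dlt)
    also have "\<dots> \<in> trel M' N'" using gen_l compatD[OF c] by (intro trel.gen_l) auto
    finally show ?case . }
  { case (gen_r m n n')
    have nn: "n \<oplus>\<^bsub>N\<^esub> n' \<in> carrier N" using ok gen_r unfolding tens_ok_def by (meson abelian_groupE(1))
    have d: "dlt (m, n \<oplus>\<^bsub>N\<^esub> n') \<in> fgen M N" "dlt (m, n) \<in> fgen M N" "dlt (m, n') \<in> fgen M N"
      using gen_r nn by (auto intro: fgen_dlt)
    have "fext ?g (\<lambda>p. dlt (m, n \<oplus>\<^bsub>N\<^esub> n') p - dlt (m, n) p - dlt (m, n') p)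
        = (\<lambda>q. dlt (\<phi> m, \<psi> n \<oplus>\<^bsub>N'\<^esub> \<psi> n') q - dlt (\<phi> m, \<psi> n) q - dlt (\<phi> m, \<psi> n') q)"
      using fext_diff[OF fgen_diff[OF d(1) d(2)] d(3), of ?g] fext_diff[OF d(1) d(2), of ?g]
        compatD(4)[OF c] gen_r by (simp add: fext_dlt)
    also have "\<dots> \<in> trel M' N'" using gen_r compatD[OF c] by (intro trel.gen_r) auto
    finally show ?case . }
  { case (gen_bal m n a)
    have cc: "ract M m a \<in> carrier M" "lact N a n \<in> carrier N" using ok gen_bal unfolding tens_ok_def by auto
    have d: "dlt (ract M m a, n) \<in> fgen M N" "dlt (m, lact N a n) \<in> fgen M N"
      using gen_bal cc by (auto intro: fgen_dlt)
    have "fext ?g (\<lambda>p. dlt (ract M m a, n) p - dlt (m, lact N a n) p)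
        = (\<lambda>q. dlt (ract M' (\<phi> m) a, \<psi> n) q - dlt (\<phi> m, lact N' a (\<psi> n)) q)"
      using fext_diff[OF d(1) d(2), of ?g] compatD(5,6)[OF c] gen_bal by (simp add: fext_dlt)
    also have "\<dots> \<in> trel M' N'" using gen_bal compatD[OF c] by (intro trel.gen_bal) auto
    finally show ?case . }
qed

lemma bil_comp:
  assumes b: "bil M' N' T \<beta>" and c: "compat M N M' N' \<phi> \<psi>"
  shows "bil M N T (\<lambda>m n. \<beta> (\<phi> m) (\<psi> n))"
  using bilD[OF b] compatD[OF c] by (intro bilI) auto

lemma tmap_tlift:
  assumes ok: "tens_ok M N" and ok': "tens_ok M' N'" and c: "compat M N M' N' \<phi> \<psi>"
    and X: "X \<in> carrier (tensor M N)"
  shows "tmap M' N' \<phi> \<psi> X = tlift (tensor M' N') (\<lambda>m n. tmk M' N' (\<phi> m) (\<psi> n)) X"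
proof -
  let ?g = "\<lambda>(m, n). (\<phi> m, \<psi> n)"
  obtain f where f: "f \<in> fgen M N" "X = tcls M N f" using X by (auto simp: tensor_carrier)
  have gc: "\<And>p. p \<in> carrier M \<times> carrier N \<Longrightarrow> ?g p \<in> carrier M' \<times> carrier N'"
    using compatD(1,2)[OF c] by auto
  have r: "rep X \<in> fgen M N" "(\<lambda>p. rep X p - f p) \<in> trel M N" using rep_tcls[OF f(1)] f(2) by auto
  have "tmap M' N' \<phi> \<psi> X = tcls M' N' (fext ?g (rep X))" by (simp add: tmap_def)
  also have "\<dots> = tcls M' N' (fext ?g f)"
  proof -
    have "fext ?g (\<lambda>p. rep X p - f p) \<in> trel M' N'" by (rule fext_trel[OF ok c r(2)])
    then have "(\<lambda>q. fext ?g (rep X) q - fext ?g f q) \<in> trel M' N'" using fext_diff[OF r(1) f(1), of ?g] by simp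
    then show ?thesis using tcls_eq_iff[OF fext_fgen[OF r(1) gc] fext_fgen[OF f(1) gc]] by simp
  qed
  also have "\<dots> = tlift (tensor M' N') (\<lambda>m n. tmk M' N' (\<phi> m) (\<psi> n)) X"
  proof -
    let ?S = "{p. f p \<noteq> 0}"
    have S: "finite ?S" "?S \<subseteq> carrier M \<times> carrier N" using f by (auto simp: fgen_def)
    interpret TT: abelian_group "tensor M' N'" by (rule tensor_abelian)
    have b: "bil M N (tensor M' N') (\<lambda>m n. tmk M' N' (\<phi> m) (\<psi> n))" by (rule bil_comp[OF bil_tmk[OF ok'] c])
    have "tlift (tensor M' N') (\<lambda>m n. tmk M' N' (\<phi> m) (\<psi> n)) X
       = finsum (tensor M' N') (\<lambda>p. [f p] \<cdot>\<^bsub>tensor M' N'\<^esub> tmk M' N' (\<phi> (fst p)) (\<psi> (snd p))) ?S"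
      unfolding f(2) tlift_tcls[OF b ok f(1)] Ssum_def ..
    also have "\<dots> = finsum (tensor M' N') (\<lambda>p. tcls M' N' (\<lambda>q. f p * dlt (?g p) q)) ?S"
    proof (rule TT.finsum_cong')
      show "\<And>p. p \<in> ?S \<Longrightarrow> [f p] \<cdot>\<^bsub>tensor M' N'\<^esub> tmk M' N' (\<phi> (fst p)) (\<psi> (snd p)) = tcls M' N' (\<lambda>q. f p * dlt (?g p) q)"
        using S gc by (auto simp: tmk_def split_beta intro!: tensor_pow fgen_dlt)
      show "(\<lambda>p. tcls M' N' (\<lambda>q. f p * dlt (?g p) q)) \<in> ?S \<rightarrow> carrier (tensor M' N')"
        using S gc by (auto intro!: tcls_carrier fgen_scale fgen_dlt)
    qed simp
    also have "\<dots> = tcls M' N' (\<lambda>q. \<Sum>p\<in>?S. f p * dlt (?g p) q)"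
      using S gc by (intro tensor_finsum) (auto intro!: fgen_scale fgen_dlt)
    also have "\<dots> = tcls M' N' (fext ?g f)" using fext_superset[OF S(1), of f ?g] by simp
    finally show ?thesis by simp
  qed
  finally show ?thesis .
qed

lemma tmap_closed:
  assumes ok: "tens_ok M N" and ok': "tens_ok M' N'" and c: "compat M N M' N' \<phi> \<psi>"
    and X: "X \<in> carrier (tensor M N)"
  shows "tmap M' N' \<phi> \<psi> X \<in> carrier (tensor M' N')"
  unfolding tmap_tlift[OF ok ok' c X]
  by (rule tlift_closed[OF tensor_abelian bil_bclosed[OF bil_comp[OF bil_tmk[OF ok'] c]] X])

lemma tmap_tmk:
  assumes ok: "tens_ok M N" and ok': "tens_ok M' N'" and c: "compat M N M' N' \<phi> \<psi>"
    and m: "m \<in> carrier M" and n: "n \<in> carrier N"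
  shows "tmap M' N' \<phi> \<psi> (tmk M N m n) = tmk M' N' (\<phi> m) (\<psi> n)"
  unfolding tmap_tlift[OF ok ok' c tmk_carrier[OF m n]]
  by (rule tlift_tmk[OF bil_comp[OF bil_tmk[OF ok'] c] ok m n])

lemma addhom_tmap:
  assumes ok: "tens_ok M N" and ok': "tens_ok M' N'" and c: "compat M N M' N' \<phi> \<psi>"
  shows "addhom (tensor M N) (tensor M' N') (tmap M' N' \<phi> \<psi>)"
proof -
  have "addhom (tensor M N) (tensor M' N') (tlift (tensor M' N') (\<lambda>m n. tmk M' N' (\<phi> m) (\<psi> n)))"
    by (rule addhom_tlift[OF bil_comp[OF bil_tmk[OF ok'] c] ok])
  then show ?thesis unfolding addhom_def using tmap_tlift[OF ok ok' c] by (simp add: tensor_abelian abelian_groupE(1))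
qed

lemma tlift_tmap:
  assumes ok: "tens_ok M N" and ok': "tens_ok M' N'" and c: "compat M N M' N' \<phi> \<psi>"
    and b: "bil M' N' T \<beta>" and X: "X \<in> carrier (tensor M N)"
  shows "tlift T \<beta> (tmap M' N' \<phi> \<psi> X) = tlift T (\<lambda>m n. \<beta> (\<phi> m) (\<psi> n)) X"
proof (rule ext_tensor[OF bilD(1)[OF b] _ _ _ X])
  show "addhom (tensor M N) T (\<lambda>X. tlift T \<beta> (tmap M' N' \<phi> \<psi> X))"
    by (rule addhom_comp[OF addhom_tmap[OF ok ok' c] addhom_tlift[OF b ok']])
  show "addhom (tensor M N) T (tlift T (\<lambda>m n. \<beta> (\<phi> m) (\<psi> n)))"
    by (rule addhom_tlift[OF bil_comp[OF b c] ok])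
  fix m n assume m: "m \<in> carrier M" and n: "n \<in> carrier N"
  show "tlift T \<beta> (tmap M' N' \<phi> \<psi> (tmk M N m n)) = tlift T (\<lambda>m n. \<beta> (\<phi> m) (\<psi> n)) (tmk M N m n)"
    using tmap_tmk[OF ok ok' c m n] tlift_tmk[OF b ok'] tlift_tmk[OF bil_comp[OF b c] ok m n] compatD(1,2)[OF c] m n
    by simp
qed

lemma compat_comp:
  assumes "compat M N M' N' \<phi> \<psi>" "compat M' N' M'' N'' \<phi>' \<psi>'"
  shows "compat M N M'' N'' (\<lambda>m. \<phi>' (\<phi> m)) (\<lambda>n. \<psi>' (\<psi> n))"
  using compatD[OF assms(1)] compatD[OF assms(2)] by (intro compatI) auto

lemma tmap_comp:
  assumes ok: "tens_ok M N" and ok': "tens_ok M' N'" and ok'': "tens_ok M'' N''"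
    and c: "compat M N M' N' \<phi> \<psi>" and c': "compat M' N' M'' N'' \<phi>' \<psi>'"
    and X: "X \<in> carrier (tensor M N)"
  shows "tmap M'' N'' \<phi>' \<psi>' (tmap M' N' \<phi> \<psi> X) = tmap M'' N'' (\<lambda>m. \<phi>' (\<phi> m)) (\<lambda>n. \<psi>' (\<psi> n)) X"
  using tmap_tlift[OF ok' ok'' c' tmap_closed[OF ok ok' c X]]
    tlift_tmap[OF ok ok' c bil_comp[OF bil_tmk[OF ok''] c'] X]
    tmap_tlift[OF ok ok'' compat_comp[OF c c'] X] by simp

lemma tmap_cong:
  assumes ok: "tens_ok M N" and ok': "tens_ok M' N'" and c: "compat M N M' N' \<phi> \<psi>"
    and c2: "compat M N M' N' \<phi>2 \<psi>2"
    and e1: "\<And>m. m \<in> carrier M \<Longrightarrow> \<phi> m = \<phi>2 m" and e2: "\<And>n. n \<in> carrier N \<Longrightarrow> \<psi> n = \<psi>2 n"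
    and X: "X \<in> carrier (tensor M N)"
  shows "tmap M' N' \<phi> \<psi> X = tmap M' N' \<phi>2 \<psi>2 X"
  unfolding tmap_tlift[OF ok ok' c X] tmap_tlift[OF ok ok' c2 X]
  by (rule tlift_cong[OF tensor_abelian bil_bclosed[OF bil_comp[OF bil_tmk[OF ok'] c]] _ X]) (simp add: e1 e2)

lemma compat_id:
  assumes "tens_ok M N"
  shows "compat M N M N id id"
  using assms by (intro compatI) (auto simp: tens_ok_def)

lemma tmap_id:
  assumes ok: "tens_ok M N" and X: "X \<in> carrier (tensor M N)"
  shows "tmap M N id id X = X"
proof (rule ext_tensor[OF tensor_abelian _ _ _ X])
  show "addhom (tensor M N) (tensor M N) (tmap M N id id)" by (rule addhom_tmap[OF ok ok compat_id[OF ok]])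
  show "addhom (tensor M N) (tensor M N) (\<lambda>x. x)" by (rule addhomI) (auto simp: tensor_abelian abelian_groupE(1))
  fix m n assume "m \<in> carrier M" "n \<in> carrier N"
  then show "tmap M N id id (tmk M N m n) = tmk M N m n" using tmap_tmk[OF ok ok compat_id[OF ok]] by simp
qed

lemma tensor_ract: "ract (tensor M N) X a = tmap M N id (\<lambda>n. ract N n a) X"
  by (simp add: tensor_def tmap_def)

lemma tensor_lact: "lact (tensor M N) a X = tmap M N (lact M a) id X"
  by (simp add: tensor_def tmap_def)




lemma addhom_add:
  assumes H: "abelian_group H" and F: "addhom G H F1" and G: "addhom G H F2"
  shows "addhom G H (\<lambda>x. F1 x \<oplus>\<^bsub>H\<^esub> F2 x)"
proof (rule addhomI)
  interpret abelian_group H by fact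
  fix x assume x: "x \<in> carrier G"
  show "F1 x \<oplus>\<^bsub>H\<^esub> F2 x \<in> carrier H" using addhomD(1)[OF F x] addhomD(1)[OF G x] by simp
  fix y assume y: "y \<in> carrier G"
  show "F1 (x \<oplus>\<^bsub>G\<^esub> y) \<oplus>\<^bsub>H\<^esub> F2 (x \<oplus>\<^bsub>G\<^esub> y) = (F1 x \<oplus>\<^bsub>H\<^esub> F2 x) \<oplus>\<^bsub>H\<^esub> (F1 y \<oplus>\<^bsub>H\<^esub> F2 y)"
    using addhomD[OF F] addhomD[OF G] x y by (simp add: a_ac)
qed

definition Aring :: "('a::ring_1) ring" where
  "Aring = \<lparr>carrier = UNIV, mult = (*), one = 1, zero = 0, add = (+)\<rparr>"

lemma Aring_simps[simp]: "carrier Aring = UNIV" "add Aring = (+)" "zero Aring = 0"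
  by (simp_all add: Aring_def)

lemma Aring_ag: "abelian_group (Aring :: ('a::ring_1) ring)"
proof (rule abelian_groupI)
  fix x :: 'a have "- x + x = 0" by simp
  then show "\<exists>y\<in>carrier Aring. y \<oplus>\<^bsub>Aring\<^esub> x = \<zero>\<^bsub>Aring\<^esub>" by (simp only: Aring_simps) blast
qed (auto simp: algebra_simps)

lemma rmodD:
  assumes "rmod M"
  shows "abelian_group M" "\<And>m a. m \<in> carrier M \<Longrightarrow> ract M m a \<in> carrier M"
    "\<And>m m' a. m \<in> carrier M \<Longrightarrow> m' \<in> carrier M \<Longrightarrow> ract M (m \<oplus>\<^bsub>M\<^esub> m') a = ract M m a \<oplus>\<^bsub>M\<^esub> ract M m' a"
    "\<And>m a b. m \<in> carrier M \<Longrightarrow> ract M m (a + b) = ract M m a \<oplus>\<^bsub>M\<^esub> ract M m b"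
    "\<And>m a b. m \<in> carrier M \<Longrightarrow> ract M (ract M m a) b = ract M m (a * b)"
    "\<And>m. m \<in> carrier M \<Longrightarrow> ract M m 1 = m"
  using assms unfolding rmod_def by blast+

lemma lmodD:
  assumes "lmod M"
  shows "abelian_group M" "\<And>m a. m \<in> carrier M \<Longrightarrow> lact M a m \<in> carrier M"
    "\<And>m m' a. m \<in> carrier M \<Longrightarrow> m' \<in> carrier M \<Longrightarrow> lact M a (m \<oplus>\<^bsub>M\<^esub> m') = lact M a m \<oplus>\<^bsub>M\<^esub> lact M a m'"
    "\<And>m a b. m \<in> carrier M \<Longrightarrow> lact M (a + b) m = lact M a m \<oplus>\<^bsub>M\<^esub> lact M b m"
    "\<And>m a b. m \<in> carrier M \<Longrightarrow> lact M a (lact M b m) = lact M (a * b) m"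
    "\<And>m. m \<in> carrier M \<Longrightarrow> lact M 1 m = m"
  using assms unfolding lmod_def by blast+

lemma bihomAD:
  assumes "bihomA M f"
  shows "\<And>m m'. m \<in> carrier M \<Longrightarrow> m' \<in> carrier M \<Longrightarrow> f (m \<oplus>\<^bsub>M\<^esub> m') = f m + f m'"
    "\<And>m a. m \<in> carrier M \<Longrightarrow> f (lact M a m) = a * f m"
    "\<And>m a. m \<in> carrier M \<Longrightarrow> f (ract M m a) = f m * a"
  using assms unfolding bihomA_def by blast+

lemma rhomD:
  assumes "rhom M N f"
  shows "\<And>m. m \<in> carrier M \<Longrightarrow> f m \<in> carrier N"
    "\<And>m m'. m \<in> carrier M \<Longrightarrow> m' \<in> carrier M \<Longrightarrow> f (m \<oplus>\<^bsub>M\<^esub> m') = f m \<oplus>\<^bsub>N\<^esub> f m'"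
    "\<And>m a. m \<in> carrier M \<Longrightarrow> f (ract M m a) = ract N (f m) a"
  using assms unfolding rhom_def by blast+

lemma rhomI:
  assumes "\<And>m. m \<in> carrier M \<Longrightarrow> f m \<in> carrier N"
    "\<And>m m'. m \<in> carrier M \<Longrightarrow> m' \<in> carrier M \<Longrightarrow> f (m \<oplus>\<^bsub>M\<^esub> m') = f m \<oplus>\<^bsub>N\<^esub> f m'"
    "\<And>m a. m \<in> carrier M \<Longrightarrow> f (ract M m a) = ract N (f m) a"
  shows "rhom M N f"
  using assms unfolding rhom_def by blast

lemma rhom_addhom: "rhom M N f \<Longrightarrow> addhom M N f"
  by (auto simp: rhom_def addhom_def)

locale cosetting =
  fixes C :: "('a::ring_1, 'c) bimod" and \<Delta> :: "'c \<Rightarrow> ('c \<times> 'c \<Rightarrow> int) set"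
    and \<epsilon> :: "'c \<Rightarrow> 'a" and \<delta> :: "('c \<times> 'c \<Rightarrow> int) set \<Rightarrow> 'a" and e :: 'c
  assumes cos: "coseparable C \<Delta> \<epsilon> \<delta>" and ein: "e \<in> coinv C"
begin

lemma cor: "coring C \<Delta> \<epsilon>" using cos by (simp add: coseparable_def)
lemma bim: "bimodule C" using cor by (simp add: coring_def)
lemma rC: "rmod C" using bim by (simp add: bimodule_def)
lemma lC: "lmod C" using bim by (simp add: bimodule_def)
lemma agC: "abelian_group C" using rmodD(1)[OF rC] .
lemma bim_comm: "c \<in> carrier C \<Longrightarrow> ract C (lact C a c) b = lact C a (ract C c b)"
  using bim by (simp add: bimodule_def)
lemma Dhom: "bihom C (tensor C C) \<Delta>" using cor by (simp add: coring_def)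
lemma epsA: "bihomA C \<epsilon>" using cor by (simp add: coring_def)
lemma coassoc: "c \<in> carrier C \<Longrightarrow> tassoc C C C (tmap (tensor C C) C \<Delta> id (\<Delta> c)) = tmap C (tensor C C) id \<Delta> (\<Delta> c)"
  using cor by (simp add: coring_def)
lemma counitL: "c \<in> carrier C \<Longrightarrow> tlift C (\<lambda>x y. lact C (\<epsilon> x) y) (\<Delta> c) = c"
  using cor by (simp add: coring_def)
lemma deltaA: "bihomA (tensor C C) \<delta>" using cos by (simp add: coseparable_def)
lemma cosep: "c \<in> carrier C \<Longrightarrow> c' \<in> carrier C \<Longrightarrow>
    tlift C (\<lambda>x y. ract C x (\<delta> (tmk C C y c'))) (\<Delta> c) = tlift C (\<lambda>x y. lact C (\<delta> (tmk C C c x)) y) (\<Delta> c')"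
  using cos by (simp add: coseparable_def)
lemma eC: "e \<in> carrier C" using ein by (simp add: coinv_def)
lemma ecomm: "lact C a e = ract C e a" using ein by (simp add: coinv_def)

lemma Dcar: "c \<in> carrier C \<Longrightarrow> \<Delta> c \<in> carrier (tensor C C)"
  using Dhom by (auto simp: bihom_def rhom_def)
lemma Dadd: "c \<in> carrier C \<Longrightarrow> c' \<in> carrier C \<Longrightarrow> \<Delta> (c \<oplus>\<^bsub>C\<^esub> c') = \<Delta> c \<oplus>\<^bsub>tensor C C\<^esub> \<Delta> c'"
  using Dhom by (auto simp: bihom_def rhom_def)
lemma Dlact: "c \<in> carrier C \<Longrightarrow> \<Delta> (lact C a c) = lact (tensor C C) a (\<Delta> c)"
  using Dhom by (auto simp: bihom_def)

lemma okCC: "tens_ok C C"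
  using rmodD(1,2)[OF rC] lmodD(2)[OF lC] by (simp add: tens_ok_def)

lemma ok_NC: "rmod N \<Longrightarrow> tens_ok N C"
  using rmodD(1,2)[of N] lmodD(2)[OF lC] agC by (simp add: tens_ok_def)

lemma compat_lact: "compat C C C C (lact C a) id"
  using lmodD[OF lC] rmodD(2)[OF rC] bim_comm by (intro compatI) auto

lemma compat_ract: "rmod N \<Longrightarrow> compat N C N C id (\<lambda>c. ract C c a)"
  using rmodD[OF rC] bim_comm by (intro compatI) auto

lemma lactCC_tmk: "x \<in> carrier C \<Longrightarrow> y \<in> carrier C \<Longrightarrow> lact (tensor C C) a (tmk C C x y) = tmk C C (lact C a x) y"
  unfolding tensor_lact using tmap_tmk[OF okCC okCC compat_lact] by simp

lemma lactCC_closed: "X \<in> carrier (tensor C C) \<Longrightarrow> lact (tensor C C) a X \<in> carrier (tensor C C)"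
  unfolding tensor_lact by (rule tmap_closed[OF okCC okCC compat_lact])

lemma ract_tmk: "rmod N \<Longrightarrow> x \<in> carrier N \<Longrightarrow> y \<in> carrier C \<Longrightarrow> ract (tensor N C) (tmk N C x y) a = tmk N C x (ract C y a)"
  unfolding tensor_ract using tmap_tmk[OF ok_NC ok_NC compat_ract] by simp

lemma ract_closed: "rmod N \<Longrightarrow> X \<in> carrier (tensor N C) \<Longrightarrow> ract (tensor N C) X a \<in> carrier (tensor N C)"
  unfolding tensor_ract by (rule tmap_closed[OF ok_NC ok_NC compat_ract])

lemma ok_NCC: "rmod N \<Longrightarrow> tens_ok N (tensor C C)"
  using rmodD(1,2)[of N] lactCC_closed tensor_abelian by (simp add: tens_ok_def)

lemma ok_NC_C: "rmod N \<Longrightarrow> tens_ok (tensor N C) C"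
  using ract_closed[of N] lmodD(2)[OF lC] agC tensor_abelian by (simp add: tens_ok_def)

lemma addhom_eps: "addhom C Aring \<epsilon>"
  using bihomAD(1)[OF epsA] by (auto intro!: addhomI)

lemma addhom_delta: "addhom (tensor C C) Aring \<delta>"
  using bihomAD(1)[OF deltaA] by (auto intro!: addhomI)

end




context cosetting
begin

lemma tmkCC_bil: "bil C C (tensor C C) (tmk C C)" by (rule bil_tmk[OF okCC])

lemma delta_tmk_add2: "x \<in> carrier C \<Longrightarrow> c \<in> carrier C \<Longrightarrow> c' \<in> carrier C \<Longrightarrow>
    \<delta> (tmk C C x (c \<oplus>\<^bsub>C\<^esub> c')) = \<delta> (tmk C C x c) + \<delta> (tmk C C x c')"
  using bilD(4)[OF tmkCC_bil] bihomAD(1)[OF deltaA tmk_carrier tmk_carrier] by simp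

lemma delta_tmk_add1: "x \<in> carrier C \<Longrightarrow> x' \<in> carrier C \<Longrightarrow> c \<in> carrier C \<Longrightarrow>
    \<delta> (tmk C C (x \<oplus>\<^bsub>C\<^esub> x') c) = \<delta> (tmk C C x c) + \<delta> (tmk C C x' c)"
  using bilD(3)[OF tmkCC_bil] bihomAD(1)[OF deltaA tmk_carrier tmk_carrier] by simp

lemma delta_lact1: "x \<in> carrier C \<Longrightarrow> c \<in> carrier C \<Longrightarrow> \<delta> (tmk C C (lact C a x) c) = a * \<delta> (tmk C C x c)"
  using lactCC_tmk bihomAD(2)[OF deltaA tmk_carrier] by simp

lemma delta_ract2: "x \<in> carrier C \<Longrightarrow> c \<in> carrier C \<Longrightarrow> \<delta> (tmk C C x (ract C c a)) = \<delta> (tmk C C x c) * a"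
  using ract_tmk[OF rC] bihomAD(3)[OF deltaA tmk_carrier] by simp

lemma delta_e_lact: "c \<in> carrier C \<Longrightarrow> \<delta> (tmk C C e (lact C a c)) = a * \<delta> (tmk C C e c)"
proof -
  assume c: "c \<in> carrier C"
  have "tmk C C e (lact C a c) = tmk C C (ract C e a) c" using bilD(5)[OF tmkCC_bil eC c] by simp
  also have "\<dots> = tmk C C (lact C a e) c" by (simp add: ecomm)
  finally show ?thesis using delta_lact1[OF eC c] by simp
qed

lemma tmk_bal:
  assumes N: "rmod N" and x: "x \<in> carrier N" and c: "c \<in> carrier C"
  shows "tmk N C (ract N x a) c = tmk N C x (lact C a c)"
  by (rule bilD(5)[OF bil_tmk[OF ok_NC[OF N]] x c])

lemma tmk_add1:
  assumes N: "rmod N" and x: "x \<in> carrier N" and x': "x' \<in> carrier N" and c: "c \<in> carrier C"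
  shows "tmk N C (x \<oplus>\<^bsub>N\<^esub> x') c = tmk N C x c \<oplus>\<^bsub>tensor N C\<^esub> tmk N C x' c"
  by (rule bilD(3)[OF bil_tmk[OF ok_NC[OF N]] x x' c])

lemma tmk_add2:
  assumes N: "rmod N" and x: "x \<in> carrier N" and c: "c \<in> carrier C" and c': "c' \<in> carrier C"
  shows "tmk N C x (c \<oplus>\<^bsub>C\<^esub> c') = tmk N C x c \<oplus>\<^bsub>tensor N C\<^esub> tmk N C x c'"
  by (rule bilD(4)[OF bil_tmk[OF ok_NC[OF N]] x c c'])

lemma addhom_ractN:
  assumes N: "rmod N"
  shows "addhom N N (\<lambda>x. ract N x a)"
  by (rule addhomI) (auto simp: rmodD(2,3)[OF N])

lemma addhom_ractNC: "rmod N \<Longrightarrow> addhom (tensor N C) (tensor N C) (\<lambda>X. ract (tensor N C) X a)"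
  unfolding tensor_ract by (rule addhom_tmap[OF ok_NC ok_NC compat_ract])

definition EN :: "('a, 'n) bimod \<Rightarrow> ('n \<times> 'c \<Rightarrow> int) set \<Rightarrow> 'n" where
  "EN N = tlift N (\<lambda>x c. ract N x (\<epsilon> c))"

lemma bil_EN:
  assumes N: "rmod N"
  shows "bil N C N (\<lambda>x c. ract N x (\<epsilon> c))"
proof (rule bilI)
  show "abelian_group N" by (rule rmodD(1)[OF N])
qed (simp_all add: rmodD(2,3,4,5)[OF N] bihomAD(1,2)[OF epsA])

lemma EN_ract:
  assumes N: "rmod N" and X: "X \<in> carrier (tensor N C)"
  shows "EN N (ract (tensor N C) X a) = ract N (EN N X) a"
  unfolding EN_def
proof (rule ext_tensor[OF rmodD(1)[OF N] _ _ _ X])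
  show "addhom (tensor N C) N (\<lambda>X. tlift N (\<lambda>x c. ract N x (\<epsilon> c)) (ract (tensor N C) X a))"
    by (rule addhom_comp[OF addhom_ractNC[OF N] addhom_tlift[OF bil_EN[OF N] ok_NC[OF N]]])
  show "addhom (tensor N C) N (\<lambda>X. ract N (tlift N (\<lambda>x c. ract N x (\<epsilon> c)) X) a)"
    by (rule addhom_comp[OF addhom_tlift[OF bil_EN[OF N] ok_NC[OF N]] addhom_ractN[OF N]])
  fix m c assume m: "m \<in> carrier N" and c: "c \<in> carrier C"
  show "tlift N (\<lambda>x c. ract N x (\<epsilon> c)) (ract (tensor N C) (tmk N C m c) a) = ract N (tlift N (\<lambda>x c. ract N x (\<epsilon> c)) (tmk N C m c)) a"
    using ract_tmk[OF N m c] tlift_tmk[OF bil_EN[OF N] ok_NC[OF N]] m c rmodD(2)[OF rC] rmodD(5)[OF N]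
      bihomAD(3)[OF epsA] by simp
qed

definition KN :: "('a, 'n) bimod \<Rightarrow> ('n \<times> 'c \<Rightarrow> int) set \<Rightarrow> 'n" where
  "KN N = tlift N (\<lambda>x c. ract N x (\<delta> (tmk C C e c)))"

lemma bil_K:
  assumes N: "rmod N"
  shows "bil N C N (\<lambda>x c. ract N x (\<delta> (tmk C C e c)))"
proof (rule bilI)
  show "abelian_group N" by (rule rmodD(1)[OF N])
qed (simp_all add: rmodD(2,3,4,5)[OF N] delta_tmk_add2[OF eC] delta_e_lact)

lemma KN_ract:
  assumes N: "rmod N" and X: "X \<in> carrier (tensor N C)"
  shows "KN N (ract (tensor N C) X a) = ract N (KN N X) a"
  unfolding KN_def
proof (rule ext_tensor[OF rmodD(1)[OF N] _ _ _ X])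
  show "addhom (tensor N C) N (\<lambda>X. tlift N (\<lambda>x c. ract N x (\<delta> (tmk C C e c))) (ract (tensor N C) X a))"
    by (rule addhom_comp[OF addhom_ractNC[OF N] addhom_tlift[OF bil_K[OF N] ok_NC[OF N]]])
  show "addhom (tensor N C) N (\<lambda>X. ract N (tlift N (\<lambda>x c. ract N x (\<delta> (tmk C C e c))) X) a)"
    by (rule addhom_comp[OF addhom_tlift[OF bil_K[OF N] ok_NC[OF N]] addhom_ractN[OF N]])
  fix m c assume m: "m \<in> carrier N" and c: "c \<in> carrier C"
  show "tlift N (\<lambda>x c. ract N x (\<delta> (tmk C C e c))) (ract (tensor N C) (tmk N C m c) a) = ract N (tlift N (\<lambda>x c. ract N x (\<delta> (tmk C C e c))) (tmk N C m c)) a"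
    using ract_tmk[OF N m c] tlift_tmk[OF bil_K[OF N] ok_NC[OF N]] m c rmodD(2)[OF rC] rmodD(5)[OF N]
      delta_ract2[OF eC c] by simp
qed

definition mu :: "('c \<times> 'c \<Rightarrow> int) set \<Rightarrow> 'c" where
  "mu = tlift C (\<lambda>x y. lact C (\<epsilon> x) y)"

lemma bil_mu: "bil C C C (\<lambda>x y. lact C (\<epsilon> x) y)"
proof (rule bilI)
  show "abelian_group C" by (rule agC)
qed (simp_all add: lmodD(2,3,4,5)[OF lC] bihomAD(1,3)[OF epsA])

lemma mu_lact:
  assumes X: "X \<in> carrier (tensor C C)"
  shows "mu (lact (tensor C C) a X) = lact C a (mu X)"
  unfolding mu_def
proof (rule ext_tensor[OF agC _ _ _ X])
  show "addhom (tensor C C) C (\<lambda>X. tlift C (\<lambda>x y. lact C (\<epsilon> x) y) (lact (tensor C C) a X))"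
    unfolding tensor_lact by (rule addhom_comp[OF addhom_tmap[OF okCC okCC compat_lact] addhom_tlift[OF bil_mu okCC]])
  show "addhom (tensor C C) C (\<lambda>X. lact C a (tlift C (\<lambda>x y. lact C (\<epsilon> x) y) X))"
    by (rule addhom_comp[OF addhom_tlift[OF bil_mu okCC]]) (use lmodD[OF lC] in \<open>auto intro!: addhomI\<close>)
  fix m c assume m: "m \<in> carrier C" and c: "c \<in> carrier C"
  show "tlift C (\<lambda>x y. lact C (\<epsilon> x) y) (lact (tensor C C) a (tmk C C m c)) = lact C a (tlift C (\<lambda>x y. lact C (\<epsilon> x) y) (tmk C C m c))"
    using lactCC_tmk[OF m c] tlift_tmk[OF bil_mu okCC] m c lmodD(2,5)[OF lC] bihomAD(2)[OF epsA] by simp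
qed

lemma mu_closed: "X \<in> carrier (tensor C C) \<Longrightarrow> mu X \<in> carrier C"
  unfolding mu_def by (rule tlift_closed[OF agC bil_bclosed[OF bil_mu]])

lemma compat_mu:
  assumes N: "rmod N"
  shows "compat N (tensor C C) N C id mu"
proof (rule compatI)
  show "\<And>X Y. X \<in> carrier (tensor C C) \<Longrightarrow> Y \<in> carrier (tensor C C) \<Longrightarrow> mu (X \<oplus>\<^bsub>tensor C C\<^esub> Y) = mu X \<oplus>\<^bsub>C\<^esub> mu Y"
    unfolding mu_def by (rule tlift_add[OF bil_mu okCC])
qed (simp_all add: mu_closed mu_lact)

definition mu' :: "('c \<times> 'c \<Rightarrow> int) set \<Rightarrow> 'c" where
  "mu' = tlift C (\<lambda>x y. lact C (\<delta> (tmk C C e x)) y)"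

lemma bil_mu': "bil C C C (\<lambda>x y. lact C (\<delta> (tmk C C e x)) y)"
proof (rule bilI)
  show "abelian_group C" by (rule agC)
qed (simp_all add: lmodD(2,3,4,5)[OF lC] delta_tmk_add2[OF eC] delta_ract2[OF eC])

lemma mu'_lact:
  assumes X: "X \<in> carrier (tensor C C)"
  shows "mu' (lact (tensor C C) a X) = lact C a (mu' X)"
  unfolding mu'_def
proof (rule ext_tensor[OF agC _ _ _ X])
  show "addhom (tensor C C) C (\<lambda>X. tlift C (\<lambda>x y. lact C (\<delta> (tmk C C e x)) y) (lact (tensor C C) a X))"
    unfolding tensor_lact by (rule addhom_comp[OF addhom_tmap[OF okCC okCC compat_lact] addhom_tlift[OF bil_mu' okCC]])
  show "addhom (tensor C C) C (\<lambda>X. lact C a (tlift C (\<lambda>x y. lact C (\<delta> (tmk C C e x)) y) X))"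
    by (rule addhom_comp[OF addhom_tlift[OF bil_mu' okCC]]) (use lmodD[OF lC] in \<open>auto intro!: addhomI\<close>)
  fix m c assume m: "m \<in> carrier C" and c: "c \<in> carrier C"
  show "tlift C (\<lambda>x y. lact C (\<delta> (tmk C C e x)) y) (lact (tensor C C) a (tmk C C m c)) = lact C a (tlift C (\<lambda>x y. lact C (\<delta> (tmk C C e x)) y) (tmk C C m c))"
    using lactCC_tmk[OF m c] tlift_tmk[OF bil_mu' okCC] m c lmodD(2,5)[OF lC] delta_e_lact by simp
qed

lemma mu'_closed: "X \<in> carrier (tensor C C) \<Longrightarrow> mu' X \<in> carrier C"
  unfolding mu'_def by (rule tlift_closed[OF agC bil_bclosed[OF bil_mu']])

lemma compat_mu':
  assumes N: "rmod N"
  shows "compat N (tensor C C) N C id mu'"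
proof (rule compatI)
  show "\<And>X Y. X \<in> carrier (tensor C C) \<Longrightarrow> Y \<in> carrier (tensor C C) \<Longrightarrow> mu' (X \<oplus>\<^bsub>tensor C C\<^esub> Y) = mu' X \<oplus>\<^bsub>C\<^esub> mu' Y"
    unfolding mu'_def by (rule tlift_add[OF bil_mu' okCC])
qed (simp_all add: mu'_closed mu'_lact)

definition r :: "'c \<Rightarrow> 'c" where
  "r c = tlift C (\<lambda>x y. ract C x (\<delta> (tmk C C y c))) (\<Delta> e)"

lemma r_eq: "c \<in> carrier C \<Longrightarrow> r c = mu' (\<Delta> c)"
  unfolding r_def mu'_def by (rule cosep[OF eC])

lemma compat_r:
  assumes N: "rmod N"
  shows "compat N C N C id r"
proof (rule compatI)
  show "\<And>c c'. c \<in> carrier C \<Longrightarrow> c' \<in> carrier C \<Longrightarrow> r (c \<oplus>\<^bsub>C\<^esub> c') = r c \<oplus>\<^bsub>C\<^esub> r c'"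
  proof -
    fix c c' assume c: "c \<in> carrier C" and c': "c' \<in> carrier C"
    have cc: "c \<oplus>\<^bsub>C\<^esub> c' \<in> carrier C" using c c' agC by (simp add: abelian_groupE(1))
    show "r (c \<oplus>\<^bsub>C\<^esub> c') = r c \<oplus>\<^bsub>C\<^esub> r c'"
      unfolding r_eq[OF cc] r_eq[OF c] r_eq[OF c'] Dadd[OF c c'] mu'_def
      by (rule tlift_add[OF bil_mu' okCC Dcar[OF c] Dcar[OF c']])
  qed
  show "\<And>c a. c \<in> carrier C \<Longrightarrow> r (lact C a c) = lact C a (r c)"
  proof -
    fix c a assume c: "c \<in> carrier C"
    have cc: "lact C a c \<in> carrier C" using lmodD(2)[OF lC c] .
    show "r (lact C a c) = lact C a (r c)"
      unfolding r_eq[OF cc] r_eq[OF c] Dlact[OF c] by (rule mu'_lact[OF Dcar[OF c]])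
  qed
qed (simp_all add: r_eq mu'_closed Dcar)

lemma eps_r:
  assumes c: "c \<in> carrier C"
  shows "\<epsilon> (r c) = \<delta> (tmk C C e c)"
proof -
  have cl1: "bclosed C C C (\<lambda>x y. ract C x (\<delta> (tmk C C y c)))"
    using rmodD(2)[OF rC] by (simp add: bclosed_def)
  have clA: "bclosed C C Aring (\<lambda>x y. \<epsilon> x * \<delta> (tmk C C y c))" by (simp add: bclosed_def)
  have "\<epsilon> (r c) = tlift Aring (\<lambda>x y. \<epsilon> (ract C x (\<delta> (tmk C C y c)))) (\<Delta> e)"
    unfolding r_def by (rule tlift_hom[OF agC Aring_ag addhom_eps cl1 Dcar[OF eC]])
  also have "\<dots> = tlift Aring (\<lambda>x y. \<epsilon> x * \<delta> (tmk C C y c)) (\<Delta> e)"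
    by (rule tlift_cong[OF Aring_ag _ _ Dcar[OF eC]]) (auto simp: bclosed_def bihomAD(3)[OF epsA])
  finally have 1: "\<epsilon> (r c) = tlift Aring (\<lambda>x y. \<epsilon> x * \<delta> (tmk C C y c)) (\<Delta> e)" .
  have F: "addhom C Aring (\<lambda>z. \<delta> (tmk C C z c))"
    using delta_tmk_add1[OF _ _ c] by (intro addhomI) auto
  have "\<delta> (tmk C C e c) = \<delta> (tmk C C (mu (\<Delta> e)) c)" using counitL[OF eC] by (simp add: mu_def)
  also have "\<dots> = tlift Aring (\<lambda>x y. \<delta> (tmk C C (lact C (\<epsilon> x) y) c)) (\<Delta> e)"
    unfolding mu_def by (rule tlift_hom[OF agC Aring_ag F bil_bclosed[OF bil_mu] Dcar[OF eC]])
  also have "\<dots> = tlift Aring (\<lambda>x y. \<epsilon> x * \<delta> (tmk C C y c)) (\<Delta> e)"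
    by (rule tlift_cong[OF Aring_ag _ _ Dcar[OF eC]]) (auto simp: bclosed_def delta_lact1[OF _ c])
  finally show ?thesis using 1 by simp
qed

lemma rmap_tlift: "rmap C \<Delta> \<delta> e N X = tlift (tensor N C) (\<lambda>n c. tmk N C n (r c)) X"
  by (simp add: rmap_def r_def)

lemma rmap_tmap:
  assumes N: "rmod N" and X: "X \<in> carrier (tensor N C)"
  shows "rmap C \<Delta> \<delta> e N X = tmap N C id r X"
  unfolding rmap_tlift using tmap_tlift[OF ok_NC[OF N] ok_NC[OF N] compat_r[OF N] X] by simp

lemma EN_rmap:
  assumes N: "rmod N" and X: "X \<in> carrier (tensor N C)"
  shows "EN N (rmap C \<Delta> \<delta> e N X) = KN N X"
  unfolding rmap_tmap[OF N X] EN_def KN_def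
proof (rule ext_tensor[OF rmodD(1)[OF N] _ _ _ X])
  show "addhom (tensor N C) N (\<lambda>X. tlift N (\<lambda>x c. ract N x (\<epsilon> c)) (tmap N C id r X))"
    by (rule addhom_comp[OF addhom_tmap[OF ok_NC ok_NC compat_r] addhom_tlift[OF bil_EN ok_NC]]) (use N in auto)
  show "addhom (tensor N C) N (tlift N (\<lambda>x c. ract N x (\<delta> (tmk C C e c))))"
    by (rule addhom_tlift[OF bil_K ok_NC]) (use N in auto)
  fix m c assume m: "m \<in> carrier N" and c: "c \<in> carrier C"
  have rc: "r c \<in> carrier C" using compatD(2)[OF compat_r[OF N] c] .
  show "tlift N (\<lambda>x c. ract N x (\<epsilon> c)) (tmap N C id r (tmk N C m c)) = tlift N (\<lambda>x c. ract N x (\<delta> (tmk C C e c))) (tmk N C m c)"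
    using tmap_tmk[OF ok_NC ok_NC compat_r, OF N N N m c] tlift_tmk[OF bil_EN[OF N] ok_NC[OF N] m rc]
      tlift_tmk[OF bil_K[OF N] ok_NC[OF N] m c] eps_r[OF c] by simp
qed

end




context cosetting
begin

definition inner :: "('a, 'n) bimod \<Rightarrow> 'c \<Rightarrow> 'n \<Rightarrow> 'c \<Rightarrow> ('n \<times> ('c \<times> 'c \<Rightarrow> int) set \<Rightarrow> int) set" where
  "inner N p = (\<lambda>m n. tmk N (tensor C C) m (tmk C C n p))"

lemma inner_bil:
  assumes N: "rmod N" and p: "p \<in> carrier C"
  shows "bil N C (tensor N (tensor C C)) (inner N p)"
proof (rule bilI)
  note b = bil_tmk[OF ok_NCC[OF N]]
  show "abelian_group (tensor N (tensor C C))" by (rule tensor_abelian)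
  show "\<And>m n. m \<in> carrier N \<Longrightarrow> n \<in> carrier C \<Longrightarrow> inner N p m n \<in> carrier (tensor N (tensor C C))"
    unfolding inner_def using p by (intro tmk_carrier) auto
  show "\<And>m m' n. m \<in> carrier N \<Longrightarrow> m' \<in> carrier N \<Longrightarrow> n \<in> carrier C \<Longrightarrow>
      inner N p (m \<oplus>\<^bsub>N\<^esub> m') n = inner N p m n \<oplus>\<^bsub>tensor N (tensor C C)\<^esub> inner N p m' n"
    unfolding inner_def using p by (intro bilD(3)[OF b] tmk_carrier) auto
  show "\<And>m n n'. m \<in> carrier N \<Longrightarrow> n \<in> carrier C \<Longrightarrow> n' \<in> carrier C \<Longrightarrow>
      inner N p m (n \<oplus>\<^bsub>C\<^esub> n') = inner N p m n \<oplus>\<^bsub>tensor N (tensor C C)\<^esub> inner N p m n'"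
    unfolding inner_def using p bilD(3)[OF tmkCC_bil] bilD(4)[OF b _ tmk_carrier tmk_carrier] by simp
  show "\<And>m n a. m \<in> carrier N \<Longrightarrow> n \<in> carrier C \<Longrightarrow> inner N p (ract N m a) n = inner N p m (lact C a n)"
    unfolding inner_def using p bilD(5)[OF b _ tmk_carrier] lactCC_tmk by simp
qed

definition assocb :: "('a, 'n) bimod \<Rightarrow> ('n \<times> 'c \<Rightarrow> int) set \<Rightarrow> 'c \<Rightarrow> ('n \<times> ('c \<times> 'c \<Rightarrow> int) set \<Rightarrow> int) set" where
  "assocb N = (\<lambda>x p. tlift (tensor N (tensor C C)) (inner N p) x)"

lemma tassoc_eq: "tassoc N C C Y = tlift (tensor N (tensor C C)) (assocb N) Y"
  by (simp add: tassoc_def assocb_def inner_def)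

lemma assoc_bil:
  assumes N: "rmod N"
  shows "bil (tensor N C) C (tensor N (tensor C C)) (assocb N)"
proof (rule bilI)
  show "abelian_group (tensor N (tensor C C))" by (rule tensor_abelian)
  show "\<And>x p. x \<in> carrier (tensor N C) \<Longrightarrow> p \<in> carrier C \<Longrightarrow> assocb N x p \<in> carrier (tensor N (tensor C C))"
    unfolding assocb_def by (rule tlift_closed[OF tensor_abelian bil_bclosed[OF inner_bil[OF N]]])
  show "\<And>x x' p. x \<in> carrier (tensor N C) \<Longrightarrow> x' \<in> carrier (tensor N C) \<Longrightarrow> p \<in> carrier C \<Longrightarrow>
      assocb N (x \<oplus>\<^bsub>tensor N C\<^esub> x') p = assocb N x p \<oplus>\<^bsub>tensor N (tensor C C)\<^esub> assocb N x' p"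
    unfolding assocb_def by (rule tlift_add[OF inner_bil[OF N] ok_NC[OF N]])
next
  fix x p p' assume x: "x \<in> carrier (tensor N C)" and p: "p \<in> carrier C" and p': "p' \<in> carrier C"
  have pp: "p \<oplus>\<^bsub>C\<^esub> p' \<in> carrier C" using p p' agC by (simp add: abelian_groupE(1))
  show "assocb N x (p \<oplus>\<^bsub>C\<^esub> p') = assocb N x p \<oplus>\<^bsub>tensor N (tensor C C)\<^esub> assocb N x p'"
    unfolding assocb_def
  proof (rule ext_tensor[OF tensor_abelian _ _ _ x])
    show "addhom (tensor N C) (tensor N (tensor C C)) (tlift (tensor N (tensor C C)) (inner N (p \<oplus>\<^bsub>C\<^esub> p')))"
      by (rule addhom_tlift[OF inner_bil[OF N pp] ok_NC[OF N]])
    show "addhom (tensor N C) (tensor N (tensor C C))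
        (\<lambda>x. tlift (tensor N (tensor C C)) (inner N p) x \<oplus>\<^bsub>tensor N (tensor C C)\<^esub> tlift (tensor N (tensor C C)) (inner N p') x)"
      by (rule addhom_add[OF tensor_abelian addhom_tlift[OF inner_bil[OF N p] ok_NC[OF N]] addhom_tlift[OF inner_bil[OF N p'] ok_NC[OF N]]])
    fix m n assume m: "m \<in> carrier N" and n: "n \<in> carrier C"
    show "tlift (tensor N (tensor C C)) (inner N (p \<oplus>\<^bsub>C\<^esub> p')) (tmk N C m n) =
        tlift (tensor N (tensor C C)) (inner N p) (tmk N C m n) \<oplus>\<^bsub>tensor N (tensor C C)\<^esub> tlift (tensor N (tensor C C)) (inner N p') (tmk N C m n)"
      unfolding tlift_tmk[OF inner_bil[OF N pp] ok_NC[OF N] m n] tlift_tmk[OF inner_bil[OF N p] ok_NC[OF N] m n]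
        tlift_tmk[OF inner_bil[OF N p'] ok_NC[OF N] m n]
      unfolding inner_def using bilD(4)[OF tmkCC_bil n p p'] bilD(4)[OF bil_tmk[OF ok_NCC[OF N]] m tmk_carrier tmk_carrier] n p p'
      by simp
  qed
next
  fix x p a assume x: "x \<in> carrier (tensor N C)" and p: "p \<in> carrier C"
  have lp: "lact C a p \<in> carrier C" using lmodD(2)[OF lC p] .
  have "assocb N (ract (tensor N C) x a) p = tlift (tensor N (tensor C C)) (\<lambda>m n. inner N p (id m) (ract C n a)) x"
    unfolding assocb_def tensor_ract
    by (rule tlift_tmap[OF ok_NC[OF N] ok_NC[OF N] compat_ract[OF N] inner_bil[OF N p] x])
  also have "\<dots> = tlift (tensor N (tensor C C)) (inner N (lact C a p)) x"
  proof (rule tlift_cong[OF tensor_abelian bil_bclosed[OF bil_comp[OF inner_bil[OF N p] compat_ract[OF N]]] _ x])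
    fix m n assume m: "m \<in> carrier N" and n: "n \<in> carrier C"
    show "inner N p (id m) (ract C n a) = inner N (lact C a p) m n"
      unfolding inner_def using bilD(5)[OF tmkCC_bil n p] by simp
  qed
  finally show "assocb N (ract (tensor N C) x a) p = assocb N x (lact C a p)" unfolding assocb_def .
qed

lemma tassoc_tmk:
  assumes N: "rmod N" and x: "x \<in> carrier (tensor N C)" and p: "p \<in> carrier C"
  shows "tassoc N C C (tmk (tensor N C) C x p) = tlift (tensor N (tensor C C)) (inner N p) x"
  using tlift_tmk[OF assoc_bil[OF N] ok_NC_C[OF N] x p] unfolding tassoc_eq assocb_def by simp

lemma addhom_tassoc:
  assumes N: "rmod N"
  shows "addhom (tensor (tensor N C) C) (tensor N (tensor C C)) (tassoc N C C)"
  unfolding tassoc_eq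
  using addhom_tlift[OF assoc_bil[OF N] ok_NC_C[OF N]] by (simp add: addhom_def)

lemma tassoc_closed:
  assumes N: "rmod N" and Y: "Y \<in> carrier (tensor (tensor N C) C)"
  shows "tassoc N C C Y \<in> carrier (tensor N (tensor C C))"
  using addhomD(1)[OF addhom_tassoc[OF N] Y] .

lemma compat_Did: "rmod N \<Longrightarrow> compat N C N (tensor C C) id \<Delta>"
  using Dcar Dadd Dlact by (intro compatI) auto

lemma compat_rhom_id: "rmod M \<Longrightarrow> rmod N \<Longrightarrow> rhom M N f \<Longrightarrow> compat M C N C f id"
  using rhomD[of M N f] by (intro compatI) auto

lemma compat_rhom_idT: "rmod M \<Longrightarrow> rmod N \<Longrightarrow> rhom M (tensor N C) f \<Longrightarrow> compat M C (tensor N C) C f id"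
  using rhomD[of M "tensor N C" f] by (intro compatI) auto

lemma compat_rhom_idCC: "rmod M \<Longrightarrow> rmod N \<Longrightarrow> rhom M N f \<Longrightarrow> compat M (tensor C C) N (tensor C C) f id"
  using rhomD[of M N f] by (intro compatI) auto

lemma EN_closed: "rmod N \<Longrightarrow> X \<in> carrier (tensor N C) \<Longrightarrow> EN N X \<in> carrier N"
  unfolding EN_def by (rule tlift_closed[OF rmodD(1) bil_bclosed[OF bil_EN]])

lemma EN_add: "rmod N \<Longrightarrow> X \<in> carrier (tensor N C) \<Longrightarrow> Y \<in> carrier (tensor N C) \<Longrightarrow>
    EN N (X \<oplus>\<^bsub>tensor N C\<^esub> Y) = EN N X \<oplus>\<^bsub>N\<^esub> EN N Y"
  unfolding EN_def by (rule tlift_add[OF bil_EN ok_NC])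

lemma rhom_ENg:
  assumes M: "rmod M" and N: "rmod N" and g: "rhom M (tensor N C) g"
  shows "rhom M N (\<lambda>x. EN N (g x))"
  using rhomD[OF g] EN_closed[OF N] EN_add[OF N] EN_ract[OF N] by (intro rhomI) auto

lemma comod_det:
  assumes M: "comodule C \<Delta> \<epsilon> M \<rho>" and N: "rmod N" and g: "comod_map_to C \<Delta> M \<rho> N g"
    and m: "m \<in> carrier M"
  shows "g m = tmap N C (\<lambda>x. EN N (g x)) id (\<rho> m)"
proof -
  have rM: "rmod M" and rho: "rhom M (tensor M C) \<rho>" using M by (auto simp: comodule_def)
  have gr: "rhom M (tensor N C) g" and gco: "\<And>m. m \<in> carrier M \<Longrightarrow>
      tmap N (tensor C C) id \<Delta> (g m) = tassoc N C C (tmap (tensor N C) C g id (\<rho> m))"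
    using g by (auto simp: comod_map_to_def)
  have gm: "g m \<in> carrier (tensor N C)" using rhomD(1)[OF gr m] .
  have rm: "\<rho> m \<in> carrier (tensor M C)" using rhomD(1)[OF rho m] .
  have "g m = tmap N C id id (g m)" using tmap_id[OF ok_NC[OF N] gm] by simp
  also have "\<dots> = tmap N C (\<lambda>x. id (id x)) (\<lambda>c. mu (\<Delta> c)) (g m)"
    by (rule tmap_cong[OF ok_NC[OF N] ok_NC[OF N] compat_id[OF ok_NC[OF N]]
          compat_comp[OF compat_Did[OF N] compat_mu[OF N]] _ _ gm]) (simp_all add: counitL mu_def)
  also have "\<dots> = tmap N C id mu (tmap N (tensor C C) id \<Delta> (g m))"
    by (rule tmap_comp[OF ok_NC[OF N] ok_NCC[OF N] ok_NC[OF N] compat_Did[OF N] compat_mu[OF N] gm, symmetric])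
  also have "\<dots> = tmap N C id mu (tassoc N C C (tmap (tensor N C) C g id (\<rho> m)))" using gco[OF m] by simp
  also have "\<dots> = tmap N C (\<lambda>x. EN N (g x)) id (\<rho> m)"
  proof (rule ext_tensor[OF tensor_abelian _ _ _ rm])
    have cg: "compat M C (tensor N C) C g id" by (rule compat_rhom_idT[OF rM N gr])
    have cf: "compat M C N C (\<lambda>x. EN N (g x)) id" by (rule compat_rhom_id[OF rM N rhom_ENg[OF rM N gr]])
    show "addhom (tensor M C) (tensor N C) (\<lambda>Y. tmap N C id mu (tassoc N C C (tmap (tensor N C) C g id Y)))"
      by (rule addhom_comp[OF addhom_comp[OF addhom_tmap[OF ok_NC[OF rM] ok_NC_C[OF N] cg] addhom_tassoc[OF N]]
            addhom_tmap[OF ok_NCC[OF N] ok_NC[OF N] compat_mu[OF N]]])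
    show "addhom (tensor M C) (tensor N C) (tmap N C (\<lambda>x. EN N (g x)) id)"
      by (rule addhom_tmap[OF ok_NC[OF rM] ok_NC[OF N] cf])
    fix m' c assume m': "m' \<in> carrier M" and c: "c \<in> carrier C"
    have gm': "g m' \<in> carrier (tensor N C)" using rhomD(1)[OF gr m'] .
    have Fh: "addhom N (tensor N C) (\<lambda>x. tmk N C x c)"
      using tmk_add1[OF N _ _ c] by (intro addhomI) (auto intro: tmk_carrier c)
    have "tmap N C id mu (tassoc N C C (tmap (tensor N C) C g id (tmk M C m' c)))
        = tmap N C id mu (tlift (tensor N (tensor C C)) (inner N c) (g m'))"
      using tmap_tmk[OF ok_NC[OF rM] ok_NC_C[OF N] cg m' c] tassoc_tmk[OF N gm' c] by simp
    also have "\<dots> = tlift (tensor N C) (\<lambda>n n'. tmap N C id mu (inner N c n n')) (g m')"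
      by (rule tlift_hom[OF tensor_abelian tensor_abelian addhom_tmap[OF ok_NCC[OF N] ok_NC[OF N] compat_mu[OF N]]
            bil_bclosed[OF inner_bil[OF N c]] gm'])
    also have "\<dots> = tlift (tensor N C) (\<lambda>n n'. tmk N C (ract N n (\<epsilon> n')) c) (g m')"
    proof (rule tlift_cong[OF tensor_abelian _ _ gm'])
      show "bclosed N C (tensor N C) (\<lambda>n n'. tmap N C id mu (inner N c n n'))"
        using addhomD(1)[OF addhom_tmap[OF ok_NCC[OF N] ok_NC[OF N] compat_mu[OF N]]]
          bilD(2)[OF inner_bil[OF N c]] by (simp add: bclosed_def)
      fix n n' assume n: "n \<in> carrier N" and n': "n' \<in> carrier C"
      show "tmap N C id mu (inner N c n n') = tmk N C (ract N n (\<epsilon> n')) c"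
        unfolding inner_def
        using tmap_tmk[OF ok_NCC[OF N] ok_NC[OF N] compat_mu[OF N] n tmk_carrier[OF n' c]]
          tlift_tmk[OF bil_mu okCC n' c] tmk_bal[OF N n c] by (simp add: mu_def)
    qed
    also have "\<dots> = tmk N C (EN N (g m')) c"
      unfolding EN_def
      by (rule tlift_hom[OF rmodD(1)[OF N] tensor_abelian Fh bil_bclosed[OF bil_EN[OF N]] gm', symmetric])
    also have "\<dots> = tmap N C (\<lambda>x. EN N (g x)) id (tmk M C m' c)"
      using tmap_tmk[OF ok_NC[OF rM] ok_NC[OF N] cf m' c] by simp
    finally show "tmap N C id mu (tassoc N C C (tmap (tensor N C) C g id (tmk M C m' c))) =
        tmap N C (\<lambda>x. EN N (g x)) id (tmk M C m' c)" .
  qed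
  finally show ?thesis .
qed

end




context cosetting
begin

lemma comoduleD:
  assumes "comodule C \<Delta> \<epsilon> M \<rho>"
  shows "rmod M" "rhom M (tensor M C) \<rho>"
    "\<And>m. m \<in> carrier M \<Longrightarrow> tlift M (\<lambda>x c. ract M x (\<epsilon> c)) (\<rho> m) = m"
    "\<And>m. m \<in> carrier M \<Longrightarrow> tassoc M C C (tmap (tensor M C) C \<rho> id (\<rho> m)) = tmap M (tensor C C) id \<Delta> (\<rho> m)"
  using assms unfolding comodule_def by blast+

lemma KN_closed: "rmod N \<Longrightarrow> X \<in> carrier (tensor N C) \<Longrightarrow> KN N X \<in> carrier N"
  unfolding KN_def by (rule tlift_closed[OF rmodD(1) bil_bclosed[OF bil_K]])

lemma KN_add: "rmod N \<Longrightarrow> X \<in> carrier (tensor N C) \<Longrightarrow> Y \<in> carrier (tensor N C) \<Longrightarrow>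
    KN N (X \<oplus>\<^bsub>tensor N C\<^esub> Y) = KN N X \<oplus>\<^bsub>N\<^esub> KN N Y"
  unfolding KN_def by (rule tlift_add[OF bil_K ok_NC])

lemma compat_KN: "rmod N \<Longrightarrow> compat (tensor N C) C N C (KN N) id"
  using KN_closed KN_add KN_ract by (intro compatI) auto

lemma rhom_Kr:
  assumes M: "rmod M" and rho: "rhom M (tensor M C) \<rho>"
  shows "rhom M M (\<lambda>x. KN M (\<rho> x))"
  using rhomD[OF rho] KN_closed[OF M] KN_add[OF M] KN_ract[OF M] by (intro rhomI) auto

lemma tmap_ract:
  assumes M: "rmod M" and N: "rmod N" and c: "compat M C N C \<phi> id" and X: "X \<in> carrier (tensor M C)"
  shows "tmap N C \<phi> id (ract (tensor M C) X a) = ract (tensor N C) (tmap N C \<phi> id X) a"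
proof (rule ext_tensor[OF tensor_abelian _ _ _ X])
  show "addhom (tensor M C) (tensor N C) (\<lambda>X. tmap N C \<phi> id (ract (tensor M C) X a))"
    by (rule addhom_comp[OF addhom_ractNC[OF M] addhom_tmap[OF ok_NC[OF M] ok_NC[OF N] c]])
  show "addhom (tensor M C) (tensor N C) (\<lambda>X. ract (tensor N C) (tmap N C \<phi> id X) a)"
    by (rule addhom_comp[OF addhom_tmap[OF ok_NC[OF M] ok_NC[OF N] c] addhom_ractNC[OF N]])
  fix m n assume m: "m \<in> carrier M" and n: "n \<in> carrier C"
  have rn: "ract C n a \<in> carrier C" using rmodD(2)[OF rC n] .
  show "tmap N C \<phi> id (ract (tensor M C) (tmk M C m n) a) = ract (tensor N C) (tmap N C \<phi> id (tmk M C m n)) a"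
    using ract_tmk[OF M m n] tmap_tmk[OF ok_NC[OF M] ok_NC[OF N] c m rn] tmap_tmk[OF ok_NC[OF M] ok_NC[OF N] c m n]
      ract_tmk[OF N compatD(1)[OF c m] n] by simp
qed

lemma compat_tmapT:
  assumes M: "rmod M" and N: "rmod N" and c: "compat M C N C \<phi> id"
  shows "compat (tensor M C) C (tensor N C) C (tmap N C \<phi> id) id"
  using tmap_closed[OF ok_NC[OF M] ok_NC[OF N] c] addhomD(2)[OF addhom_tmap[OF ok_NC[OF M] ok_NC[OF N] c]]
    tmap_ract[OF M N c] by (intro compatI) auto

lemma nat_assoc:
  assumes M: "rmod M" and N: "rmod N" and c: "compat M C N C \<phi> id"
    and Y: "Y \<in> carrier (tensor (tensor M C) C)"
  shows "tassoc N C C (tmap (tensor N C) C (tmap N C \<phi> id) id Y) = tmap N (tensor C C) \<phi> id (tassoc M C C Y)"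
proof (rule ext_tensor[OF tensor_abelian _ _ _ Y])
  have cCC: "compat M (tensor C C) N (tensor C C) \<phi> id"
    using compatD[OF c] by (intro compatI) auto
  show "addhom (tensor (tensor M C) C) (tensor N (tensor C C)) (\<lambda>Y. tassoc N C C (tmap (tensor N C) C (tmap N C \<phi> id) id Y))"
    by (rule addhom_comp[OF addhom_tmap[OF ok_NC_C[OF M] ok_NC_C[OF N] compat_tmapT[OF M N c]] addhom_tassoc[OF N]])
  show "addhom (tensor (tensor M C) C) (tensor N (tensor C C)) (\<lambda>Y. tmap N (tensor C C) \<phi> id (tassoc M C C Y))"
    by (rule addhom_comp[OF addhom_tassoc[OF M] addhom_tmap[OF ok_NCC[OF M] ok_NCC[OF N] cCC]])
  fix x p assume x: "x \<in> carrier (tensor M C)" and p: "p \<in> carrier C"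
  have tx: "tmap N C \<phi> id x \<in> carrier (tensor N C)" by (rule tmap_closed[OF ok_NC[OF M] ok_NC[OF N] c x])
  have "tassoc N C C (tmap (tensor N C) C (tmap N C \<phi> id) id (tmk (tensor M C) C x p))
      = tlift (tensor N (tensor C C)) (inner N p) (tmap N C \<phi> id x)"
    using tmap_tmk[OF ok_NC_C[OF M] ok_NC_C[OF N] compat_tmapT[OF M N c] x p] tassoc_tmk[OF N tx p] by simp
  also have "\<dots> = tlift (tensor N (tensor C C)) (\<lambda>m n. inner N p (\<phi> m) (id n)) x"
    by (rule tlift_tmap[OF ok_NC[OF M] ok_NC[OF N] c inner_bil[OF N p] x])
  also have "\<dots> = tlift (tensor N (tensor C C)) (\<lambda>m n. tmap N (tensor C C) \<phi> id (inner M p m n)) x"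
  proof (rule tlift_cong[OF tensor_abelian bil_bclosed[OF bil_comp[OF inner_bil[OF N p] c]] _ x])
    fix m n assume m: "m \<in> carrier M" and n: "n \<in> carrier C"
    show "inner N p (\<phi> m) (id n) = tmap N (tensor C C) \<phi> id (inner M p m n)"
      unfolding inner_def using tmap_tmk[OF ok_NCC[OF M] ok_NCC[OF N] cCC m tmk_carrier[OF n p]] by simp
  qed
  also have "\<dots> = tmap N (tensor C C) \<phi> id (tlift (tensor M (tensor C C)) (inner M p) x)"
    by (rule tlift_hom[OF tensor_abelian tensor_abelian addhom_tmap[OF ok_NCC[OF M] ok_NCC[OF N] cCC]
          bil_bclosed[OF inner_bil[OF M p]] x, symmetric])
  also have "\<dots> = tmap N (tensor C C) \<phi> id (tassoc M C C (tmk (tensor M C) C x p))"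
    using tassoc_tmk[OF M x p] by simp
  finally show "tassoc N C C (tmap (tensor N C) C (tmap N C \<phi> id) id (tmk (tensor M C) C x p)) =
      tmap N (tensor C C) \<phi> id (tassoc M C C (tmk (tensor M C) C x p))" .
qed

lemma nat_K:
  assumes M: "rmod M" and Y: "Y \<in> carrier (tensor (tensor M C) C)"
  shows "tmap M C id mu' (tassoc M C C Y) = tmap M C (KN M) id Y"
proof (rule ext_tensor[OF tensor_abelian _ _ _ Y])
  show "addhom (tensor (tensor M C) C) (tensor M C) (\<lambda>Y. tmap M C id mu' (tassoc M C C Y))"
    by (rule addhom_comp[OF addhom_tassoc[OF M] addhom_tmap[OF ok_NCC[OF M] ok_NC[OF M] compat_mu'[OF M]]])
  show "addhom (tensor (tensor M C) C) (tensor M C) (tmap M C (KN M) id)"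
    by (rule addhom_tmap[OF ok_NC_C[OF M] ok_NC[OF M] compat_KN[OF M]])
  fix x p assume x: "x \<in> carrier (tensor M C)" and p: "p \<in> carrier C"
  have Fh: "addhom M (tensor M C) (\<lambda>y. tmk M C y p)"
    using tmk_add1[OF M _ _ p] by (intro addhomI) (auto intro: tmk_carrier p)
  have "tmap M C id mu' (tassoc M C C (tmk (tensor M C) C x p))
      = tmap M C id mu' (tlift (tensor M (tensor C C)) (inner M p) x)"
    using tassoc_tmk[OF M x p] by simp
  also have "\<dots> = tlift (tensor M C) (\<lambda>m n. tmap M C id mu' (inner M p m n)) x"
    by (rule tlift_hom[OF tensor_abelian tensor_abelian addhom_tmap[OF ok_NCC[OF M] ok_NC[OF M] compat_mu'[OF M]]
          bil_bclosed[OF inner_bil[OF M p]] x])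
  also have "\<dots> = tlift (tensor M C) (\<lambda>m n. tmk M C (ract M m (\<delta> (tmk C C e n))) p) x"
  proof (rule tlift_cong[OF tensor_abelian _ _ x])
    show "bclosed M C (tensor M C) (\<lambda>m n. tmap M C id mu' (inner M p m n))"
      using addhomD(1)[OF addhom_tmap[OF ok_NCC[OF M] ok_NC[OF M] compat_mu'[OF M]]]
        bilD(2)[OF inner_bil[OF M p]] by (simp add: bclosed_def)
    fix m n assume m: "m \<in> carrier M" and n: "n \<in> carrier C"
    show "tmap M C id mu' (inner M p m n) = tmk M C (ract M m (\<delta> (tmk C C e n))) p"
      unfolding inner_def
      using tmap_tmk[OF ok_NCC[OF M] ok_NC[OF M] compat_mu'[OF M] m tmk_carrier[OF n p]]
        tlift_tmk[OF bil_mu' okCC n p] tmk_bal[OF M m p] by (simp add: mu'_def)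
  qed
  also have "\<dots> = tmk M C (KN M x) p"
    unfolding KN_def
    by (rule tlift_hom[OF rmodD(1)[OF M] tensor_abelian Fh bil_bclosed[OF bil_K[OF M]] x, symmetric])
  also have "\<dots> = tmap M C (KN M) id (tmk (tensor M C) C x p)"
    using tmap_tmk[OF ok_NC_C[OF M] ok_NC[OF M] compat_KN[OF M] x p] by simp
  finally show "tmap M C id mu' (tassoc M C C (tmk (tensor M C) C x p)) = tmap M C (KN M) id (tmk (tensor M C) C x p)" .
qed

lemma key:
  assumes Mc: "comodule C \<Delta> \<epsilon> M \<rho>" and m: "m \<in> carrier M"
  shows "tmap M C id r (\<rho> m) = tmap M C (\<lambda>x. KN M (\<rho> x)) id (\<rho> m)"
proof -
  note M = comoduleD(1)[OF Mc] and rho = comoduleD(2)[OF Mc]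
  have rm: "\<rho> m \<in> carrier (tensor M C)" using rhomD(1)[OF rho m] .
  have crho: "compat M C (tensor M C) C \<rho> id" by (rule compat_rhom_idT[OF M M rho])
  have "tmap M C id r (\<rho> m) = tmap M C (\<lambda>x. id (id x)) (\<lambda>c. mu' (\<Delta> c)) (\<rho> m)"
    by (rule tmap_cong[OF ok_NC[OF M] ok_NC[OF M] compat_r[OF M] compat_comp[OF compat_Did[OF M] compat_mu'[OF M]] _ _ rm])
      (simp_all add: r_eq)
  also have "\<dots> = tmap M C id mu' (tmap M (tensor C C) id \<Delta> (\<rho> m))"
    by (rule tmap_comp[OF ok_NC[OF M] ok_NCC[OF M] ok_NC[OF M] compat_Did[OF M] compat_mu'[OF M] rm, symmetric])
  also have "\<dots> = tmap M C id mu' (tassoc M C C (tmap (tensor M C) C \<rho> id (\<rho> m)))"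
    using comoduleD(4)[OF Mc m] by simp
  also have "\<dots> = tmap M C (KN M) id (tmap (tensor M C) C \<rho> id (\<rho> m))"
    by (rule nat_K[OF M tmap_closed[OF ok_NC[OF M] ok_NC_C[OF M] crho rm]])
  also have "\<dots> = tmap M C (\<lambda>x. KN M (\<rho> x)) (\<lambda>c. id (id c)) (\<rho> m)"
    by (rule tmap_comp[OF ok_NC[OF M] ok_NC_C[OF M] ok_NC[OF M] crho compat_KN[OF M] rm])
  finally show ?thesis by (simp add: id_def)
qed

lemma fwd:
  fixes M :: "('a, 'm) bimod"
  assumes Mc: "comodule C \<Delta> \<epsilon> M \<rho>" and fs: "formally_smooth TYPE('m) C \<Delta> \<delta> e M \<rho>"
  shows "\<exists>\<phi>. rhom M M \<phi> \<and> (\<forall>m\<in>carrier M. \<phi> (kappa C \<delta> e M \<rho> m) = m)"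
proof -
  note M = comoduleD(1)[OF Mc] and rho = comoduleD(2)[OF Mc]
  have h: "comod_map_to C \<Delta> M \<rho> M \<rho>"
    using rho comoduleD(4)[OF Mc] by (simp add: comod_map_to_def)
  obtain g where g: "comod_map_to C \<Delta> M \<rho> M g" and gr: "\<And>m. m \<in> carrier M \<Longrightarrow> rmap C \<Delta> \<delta> e M (g m) = \<rho> m"
    using fs M h unfolding formally_smooth_def by blast
  have grh: "rhom M (tensor M C) g" using g by (simp add: comod_map_to_def)
  let ?\<phi> = "\<lambda>x. EN M (g x)"
  have ph: "rhom M M ?\<phi>" by (rule rhom_ENg[OF M M grh])
  have cph: "compat M C M C ?\<phi> id" by (rule compat_rhom_id[OF M M ph])
  have "\<forall>m\<in>carrier M. ?\<phi> (kappa C \<delta> e M \<rho> m) = m"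
  proof
    fix m assume m: "m \<in> carrier M"
    have rm: "\<rho> m \<in> carrier (tensor M C)" using rhomD(1)[OF rho m] .
    have gm: "g m \<in> carrier (tensor M C)" using rhomD(1)[OF grh m] .
    have "KN M (g m) = KN M (tmap M C ?\<phi> id (\<rho> m))" using comod_det[OF Mc M g m] by simp
    also have "\<dots> = tlift M (\<lambda>x c. ract M (?\<phi> x) (\<delta> (tmk C C e (id c)))) (\<rho> m)"
      unfolding KN_def by (rule tlift_tmap[OF ok_NC[OF M] ok_NC[OF M] cph bil_K[OF M] rm])
    also have "\<dots> = tlift M (\<lambda>x c. ?\<phi> (ract M x (\<delta> (tmk C C e c)))) (\<rho> m)"
      by (rule tlift_cong[OF rmodD(1)[OF M] bil_bclosed[OF bil_comp[OF bil_K[OF M] cph]] _ rm])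
        (simp add: rhomD(3)[OF ph])
    also have "\<dots> = ?\<phi> (KN M (\<rho> m))"
      unfolding KN_def by (rule tlift_hom[OF rmodD(1)[OF M] rmodD(1)[OF M] rhom_addhom[OF ph] bil_bclosed[OF bil_K[OF M]] rm, symmetric])
    finally have 1: "KN M (g m) = ?\<phi> (KN M (\<rho> m))" .
    have "KN M (g m) = EN M (rmap C \<Delta> \<delta> e M (g m))" using EN_rmap[OF M gm] by simp
    also have "\<dots> = m" using gr[OF m] comoduleD(3)[OF Mc m] by (simp add: EN_def)
    finally show "?\<phi> (kappa C \<delta> e M \<rho> m) = m" using 1 by (simp add: kappa_def KN_def)
  qed
  then show ?thesis using ph by blast
qed

lemma bwd:
  assumes Mc: "comodule C \<Delta> \<epsilon> M \<rho>" and ph: "rhom M M \<phi>"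
    and inv: "\<forall>m\<in>carrier M. \<phi> (kappa C \<delta> e M \<rho> m) = m"
    and N: "rmod N" and h: "comod_map_to C \<Delta> M \<rho> N h"
  shows "\<exists>g. comod_map_to C \<Delta> M \<rho> N g \<and> (\<forall>m\<in>carrier M. rmap C \<Delta> \<delta> e N (g m) = h m)"
proof -
  note M = comoduleD(1)[OF Mc] and rho = comoduleD(2)[OF Mc]
  have hr: "rhom M (tensor N C) h" using h by (simp add: comod_map_to_def)
  let ?f = "\<lambda>x. EN N (h x)"
  have fr: "rhom M N ?f" by (rule rhom_ENg[OF M N hr])
  let ?f' = "\<lambda>x. ?f (\<phi> x)"
  have f'r: "rhom M N ?f'" using rhomD[OF fr] rhomD[OF ph] by (intro rhomI) auto
  have cf': "compat M C N C ?f' id" by (rule compat_rhom_id[OF M N f'r])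
  have crho: "compat M C (tensor M C) C \<rho> id" by (rule compat_rhom_idT[OF M M rho])
  let ?g = "\<lambda>m. tmap N C ?f' id (\<rho> m)"
  have gr: "rhom M (tensor N C) ?g"
  proof (rule rhomI)
    fix m assume m: "m \<in> carrier M"
    have rm: "\<rho> m \<in> carrier (tensor M C)" using rhomD(1)[OF rho m] .
    show "?g m \<in> carrier (tensor N C)" by (rule tmap_closed[OF ok_NC[OF M] ok_NC[OF N] cf' rm])
    fix a show "?g (ract M m a) = ract (tensor N C) (?g m) a"
      using rhomD(3)[OF rho m] tmap_ract[OF M N cf' rm] by simp
  next
    fix m m' assume m: "m \<in> carrier M" and m': "m' \<in> carrier M"
    show "?g (m \<oplus>\<^bsub>M\<^esub> m') = ?g m \<oplus>\<^bsub>tensor N C\<^esub> ?g m'"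
      using rhomD(2)[OF rho m m'] addhomD(2)[OF addhom_tmap[OF ok_NC[OF M] ok_NC[OF N] cf'] rhomD(1)[OF rho m] rhomD(1)[OF rho m']]
      by simp
  qed
  have cg: "comod_map_to C \<Delta> M \<rho> N ?g"
    unfolding comod_map_to_def
  proof (intro conjI ballI)
    show "rhom M (tensor N C) ?g" by (rule gr)
    fix m assume m: "m \<in> carrier M"
    have rm: "\<rho> m \<in> carrier (tensor M C)" using rhomD(1)[OF rho m] .
    have cCC: "compat M (tensor C C) N (tensor C C) ?f' id" by (rule compat_rhom_idCC[OF M N f'r])
    have "tmap N (tensor C C) id \<Delta> (?g m) = tmap N (tensor C C) (\<lambda>x. id (?f' x)) (\<lambda>c. \<Delta> (id c)) (\<rho> m)"
      by (rule tmap_comp[OF ok_NC[OF M] ok_NC[OF N] ok_NCC[OF N] cf' compat_Did[OF N] rm])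
    also have "\<dots> = tmap N (tensor C C) (\<lambda>x. ?f' (id x)) (\<lambda>c. id (\<Delta> c)) (\<rho> m)" by simp
    also have "\<dots> = tmap N (tensor C C) ?f' id (tmap M (tensor C C) id \<Delta> (\<rho> m))"
      by (rule tmap_comp[OF ok_NC[OF M] ok_NCC[OF M] ok_NCC[OF N] compat_Did[OF M] cCC rm, symmetric])
    also have "\<dots> = tmap N (tensor C C) ?f' id (tassoc M C C (tmap (tensor M C) C \<rho> id (\<rho> m)))"
      using comoduleD(4)[OF Mc m] by simp
    also have "\<dots> = tassoc N C C (tmap (tensor N C) C (tmap N C ?f' id) id (tmap (tensor M C) C \<rho> id (\<rho> m)))"
      by (rule nat_assoc[OF M N cf' tmap_closed[OF ok_NC[OF M] ok_NC_C[OF M] crho rm], symmetric])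
    also have "tmap (tensor N C) C (tmap N C ?f' id) id (tmap (tensor M C) C \<rho> id (\<rho> m))
        = tmap (tensor N C) C (\<lambda>x. tmap N C ?f' id (\<rho> x)) (\<lambda>c. id (id c)) (\<rho> m)"
      by (rule tmap_comp[OF ok_NC[OF M] ok_NC_C[OF M] ok_NC_C[OF N] crho compat_tmapT[OF M N cf'] rm])
    also have "\<dots> = tmap (tensor N C) C ?g id (\<rho> m)" by (simp add: id_def)
    finally show "tmap N (tensor C C) id \<Delta> (?g m) = tassoc N C C (tmap (tensor N C) C ?g id (\<rho> m))" .
  qed
  have "\<forall>m\<in>carrier M. rmap C \<Delta> \<delta> e N (?g m) = h m"
  proof
    fix m assume m: "m \<in> carrier M"
    have rm: "\<rho> m \<in> carrier (tensor M C)" using rhomD(1)[OF rho m] .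
    have gm: "?g m \<in> carrier (tensor N C)" using rhomD(1)[OF gr m] .
    have ck: "compat M C M C (\<lambda>x. KN M (\<rho> x)) id" by (rule compat_rhom_id[OF M M rhom_Kr[OF M rho]])
    have "rmap C \<Delta> \<delta> e N (?g m) = tmap N C id r (?g m)" by (rule rmap_tmap[OF N gm])
    also have "\<dots> = tmap N C (\<lambda>x. id (?f' x)) (\<lambda>c. r (id c)) (\<rho> m)"
      by (rule tmap_comp[OF ok_NC[OF M] ok_NC[OF N] ok_NC[OF N] cf' compat_r[OF N] rm])
    also have "\<dots> = tmap N C (\<lambda>x. ?f' (id x)) (\<lambda>c. id (r c)) (\<rho> m)" by simp
    also have "\<dots> = tmap N C ?f' id (tmap M C id r (\<rho> m))"
      by (rule tmap_comp[OF ok_NC[OF M] ok_NC[OF M] ok_NC[OF N] compat_r[OF M] cf' rm, symmetric])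
    also have "\<dots> = tmap N C ?f' id (tmap M C (\<lambda>x. KN M (\<rho> x)) id (\<rho> m))" using key[OF Mc m] by simp
    also have "\<dots> = tmap N C (\<lambda>x. ?f' (KN M (\<rho> x))) (\<lambda>c. id (id c)) (\<rho> m)"
      by (rule tmap_comp[OF ok_NC[OF M] ok_NC[OF M] ok_NC[OF N] ck cf' rm])
    also have "\<dots> = tmap N C ?f id (\<rho> m)"
    proof (rule tmap_cong[OF ok_NC[OF M] ok_NC[OF N] compat_comp[OF ck cf'] compat_rhom_id[OF M N fr] _ _ rm])
      fix x assume x: "x \<in> carrier M"
      show "?f' (KN M (\<rho> x)) = ?f x" using inv x by (simp add: kappa_def KN_def)
    qed simp
    also have "\<dots> = h m" using comod_det[OF Mc N h m] by simp
    finally show "rmap C \<Delta> \<delta> e N (?g m) = h m" .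
  qed
  then show ?thesis using cg by blast
qed

end


context cosetting
begin

lemma bwd_fs:
  assumes Mc: "comodule C \<Delta> \<epsilon> M \<rho>"
    and ex: "\<exists>\<phi>. rhom M M \<phi> \<and> (\<forall>m\<in>carrier M. \<phi> (kappa C \<delta> e M \<rho> m) = m)"
  shows "formally_smooth TYPE('n) C \<Delta> \<delta> e M \<rho>"
  unfolding formally_smooth_def
proof (intro allI impI)
  fix N :: "('a, 'n) bimod" and h
  assume N: "rmod N" and h: "comod_map_to C \<Delta> M \<rho> N h"
  obtain \<phi> where ph: "rhom M M \<phi>" and inv: "\<forall>m\<in>carrier M. \<phi> (kappa C \<delta> e M \<rho> m) = m" using ex by blast
  show "\<exists>g. comod_map_to C \<Delta> M \<rho> N g \<and> (\<forall>m\<in>carrier M. rmap C \<Delta> \<delta> e N (g m) = h m)"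
    by (rule bwd[OF Mc ph inv N h])
qed

end

theorem proposition4p5:
  fixes C :: "('a::ring_1, 'c) bimod"
    and \<Delta> :: "'c \<Rightarrow> ('c \<times> 'c \<Rightarrow> int) set"
    and \<epsilon> :: "'c \<Rightarrow> 'a"
    and \<delta> :: "('c \<times> 'c \<Rightarrow> int) set \<Rightarrow> 'a"
    and e :: 'c
    and M :: "('a, 'm) bimod"
    and \<rho> :: "'m \<Rightarrow> ('m \<times> 'c \<Rightarrow> int) set"
  assumes "coseparable C \<Delta> \<epsilon> \<delta>"
    and "e \<in> coinv C"
    and "comodule C \<Delta> \<epsilon> M \<rho>"
  shows "(formally_smooth TYPE('m) C \<Delta> \<delta> e M \<rho> \<longleftrightarrow>
            (\<exists>\<phi>. rhom M M \<phi> \<and> (\<forall>m\<in>carrier M. \<phi> (kappa C \<delta> e M \<rho> m) = m)))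
       \<and> ((\<exists>\<phi>. rhom M M \<phi> \<and> (\<forall>m\<in>carrier M. \<phi> (kappa C \<delta> e M \<rho> m) = m))
            \<longrightarrow> formally_smooth TYPE('n) C \<Delta> \<delta> e M \<rho>)"
proof -
  interpret cosetting C \<Delta> \<epsilon> \<delta> e by (rule cosetting.intro) (fact assms(1), fact assms(2))
  show ?thesis
    using fwd[OF assms(3)] bwd_fs[OF assms(3), where 'n='m] bwd_fs[OF assms(3), where 'n='n] by blast
qed

end
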